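(* Let $M$ be a compact connected $1$-manifold and let $G$ be a group acting by homeomorphisms of $M$, generated by a finite symmetric set $\mathcal{G}$, and assume $G$ has subexponential growth, i.e. $\lim_{n\to\infty}\frac{1}{n}\log|B(n)| = 0$ where $B(n)$ is the set of elements of word length at most $n$ with respect to $\mathcal{G}$. Then for every $\varepsilon>0$ there is a homeomorphism $h$ of $M$ such that $hgh^{-1}$ is Lipschitz with Lipschitz constant at most $e^{\varepsilon}$ for every $g\in\mathcal{G}$. In particular, for every homeomorphism $f$ of the circle and every $\varepsilon>0$, $f$ is topologically conjugate to a Lipschitz homeomorphism with Lipschitz constant at most $e^{\varepsilon}$, and consequently the topological entropy of every circle homeomorphism is zero.
   Context: Word length $\|f\|$ of $f\in G$ with respect to $\mathcal{G}$: the minimal number of factors from $\mathcal{G}$ needed to write $f$. *)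

theory Defs
  imports "HOL-Analysis.Analysis" "HOL-Algebra.Group" "HOL-Algebra.Generated_Groups"
begin

text \<open>Models of compact connected 1-manifolds with their standard length metric:
  the unit interval and the unit circle (as subsets of the complex plane).\<close>

definition unit_interval_c :: "complex set" where
  "unit_interval_c = complex_of_real ` {0..1}"

definition circle :: "complex set" where
  "circle = sphere 0 1"

definition circ_dist :: "complex \<Rightarrow> complex \<Rightarrow> real" where
  "circ_dist z w = \<bar>Arg (z / w)\<bar>"

definition cc_one_manifold :: "complex set \<Rightarrow> (complex \<Rightarrow> complex \<Rightarrow> real) \<Rightarrow> bool" where
  "cc_one_manifold M d \<longleftrightarrow> (M = unit_interval_c \<and> d = dist) \<or> (M = circle \<and> d = circ_dist)"

definition lipschitz_wrt :: "('a \<Rightarrow> 'a \<Rightarrow> real) \<Rightarrow> 'a set \<Rightarrow> real \<Rightarrow> ('a \<Rightarrow> 'a) \<Rightarrow> bool" where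
  "lipschitz_wrt d M L f \<longleftrightarrow> (\<forall>x\<in>M. \<forall>y\<in>M. d (f x) (f y) \<le> L * d x y)"

definition word_length :: "('g, 'b) monoid_scheme \<Rightarrow> 'g set \<Rightarrow> 'g \<Rightarrow> nat" where
  "word_length G S g = (LEAST n. \<exists>ws. set ws \<subseteq> S \<and> length ws = n \<and> foldr (\<otimes>\<^bsub>G\<^esub>) ws \<one>\<^bsub>G\<^esub> = g)"

definition word_ball :: "('g, 'b) monoid_scheme \<Rightarrow> 'g set \<Rightarrow> nat \<Rightarrow> 'g set" where
  "word_ball G S n = {g \<in> carrier G. word_length G S g \<le> n}"

definition separated_set ::
  "('a \<Rightarrow> 'a \<Rightarrow> real) \<Rightarrow> 'a set \<Rightarrow> ('a \<Rightarrow> 'a) \<Rightarrow> nat \<Rightarrow> real \<Rightarrow> 'a set \<Rightarrow> bool" where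
  "separated_set d X f n e S \<longleftrightarrow> S \<subseteq> X \<and> finite S \<and>
     (\<forall>x\<in>S. \<forall>y\<in>S. x \<noteq> y \<longrightarrow> (\<exists>k<n. d ((f ^^ k) x) ((f ^^ k) y) > e))"

definition max_separated :: "('a \<Rightarrow> 'a \<Rightarrow> real) \<Rightarrow> 'a set \<Rightarrow> ('a \<Rightarrow> 'a) \<Rightarrow> nat \<Rightarrow> real \<Rightarrow> nat" where
  "max_separated d X f n e = (GREATEST k. \<exists>S. separated_set d X f n e S \<and> card S = k)"

definition top_entropy :: "('a \<Rightarrow> 'a \<Rightarrow> real) \<Rightarrow> 'a set \<Rightarrow> ('a \<Rightarrow> 'a) \<Rightarrow> ereal" where
  "top_entropy d X f =
     (SUP e\<in>{0<..}. limsup (\<lambda>n. ereal (ln (real (max_separated d X f n e)) / real n)))"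

end

theory Submission
  imports Defs
begin

definition preL :: "(real \<Rightarrow> complex) \<Rightarrow> (complex \<Rightarrow> complex) \<Rightarrow> complex set \<Rightarrow> real set" where
  "preL \<gamma> r X = {t\<in>{0..1}. r (\<gamma> t) \<in> X}"

definition Lm :: "(real \<Rightarrow> complex) \<Rightarrow> (complex \<Rightarrow> complex) \<Rightarrow> complex set \<Rightarrow> real" where
  "Lm \<gamma> r X = measure lebesgue (preL \<gamma> r X)"

lemma preL_compact:
  assumes "continuous_on {0..1} (r \<circ> \<gamma>)" "closed X"
  shows "compact (preL \<gamma> r X)"
proof -
  have "closed ({0..1} \<inter> (r \<circ> \<gamma>) -` X)"
    by (rule continuous_closed_preimage[OF assms(1)]) (use assms in auto)
  moreover have "preL \<gamma> r X = {0..1} \<inter> (r \<circ> \<gamma>) -` X" by (auto simp: preL_def)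
  ultimately show ?thesis
    by (metis bounded_Int bounded_closed_interval compact_eq_bounded_closed)
qed

lemma preL_mono: "X \<subseteq> Y \<Longrightarrow> preL \<gamma> r X \<subseteq> preL \<gamma> r Y"
  by (auto simp: preL_def)

locale param =
  fixes \<gamma> :: "real \<Rightarrow> complex" and M :: "complex set"
  assumes \<gamma>cont: "continuous_on {0..1} \<gamma>" and \<gamma>img: "\<gamma> ` {0..1} = M"
    and \<gamma>fib: "\<And>z. finite {t\<in>{0..1}. \<gamma> t = z}"
    and \<gamma>arc: "\<And>a b. 0 \<le> a \<Longrightarrow> a \<le> b \<Longrightarrow> b \<le> 1 \<Longrightarrow>
                 \<exists>F. finite F \<and> {t\<in>{0..1}. \<gamma> t \<in> \<gamma>`{a..b}} \<subseteq> {a..b} \<union> F"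
    and \<gamma>small: "\<And>\<eta>. \<eta> > 0 \<Longrightarrow> \<exists>\<delta>>0. \<forall>c. measure lebesgue {t\<in>{0..1}. \<gamma> t \<in> cball c \<delta>} \<le> \<eta>"
begin

lemma M_compact: "compact M"
  using \<gamma>img \<gamma>cont compact_continuous_image by blast

lemma preL_id_arc:
  assumes "0 \<le> a" "a \<le> b" "b \<le> 1"
  shows "measure lebesgue (preL \<gamma> id (\<gamma>`{a..b})) = b - a"
proof -
  obtain F where F: "finite F" "{t\<in>{0..1}. \<gamma> t \<in> \<gamma>`{a..b}} \<subseteq> {a..b} \<union> F"
    using \<gamma>arc assms by blast
  have P: "preL \<gamma> id (\<gamma>`{a..b}) = {t\<in>{0..1}. \<gamma> t \<in> \<gamma>`{a..b}}" by (simp add: preL_def)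
  have cpt: "compact (preL \<gamma> id (\<gamma>`{a..b}))"
    by (rule preL_compact) (use \<gamma>cont assms in \<open>auto intro!: compact_imp_closed compact_continuous_image
        elim: continuous_on_subset\<close>)
  have sub1: "{a..b} \<subseteq> preL \<gamma> id (\<gamma>`{a..b})" using assms by (auto simp: P)
  have "b - a = measure lebesgue {a..b}" using assms by simp
  also have "\<dots> \<le> measure lebesgue (preL \<gamma> id (\<gamma>`{a..b}))"
    by (rule measure_mono_fmeasurable[OF sub1]) (use cpt lmeasurable_compact in auto)
  finally have le1: "b - a \<le> measure lebesgue (preL \<gamma> id (\<gamma>`{a..b}))" .
  have m1: "preL \<gamma> id (\<gamma>`{a..b}) \<in> lmeasurable" using cpt lmeasurable_compact by blast
  have m2: "F \<in> lmeasurable" by (simp add: F finite_imp_compact lmeasurable_compact)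
  have "measure lebesgue (preL \<gamma> id (\<gamma>`{a..b})) \<le> measure lebesgue ({a..b} \<union> F)"
    by (rule measure_mono_fmeasurable[OF _ fmeasurableD[OF m1] fmeasurable.Un[OF _ m2]]) (use F P in auto)
  also have "\<dots> = measure lebesgue {a..b}"
    by (rule measure_Un_null_set) (use F negligible_finite negligible_iff_null_sets in auto)
  also have "\<dots> = b - a" using assms by simp
  finally show ?thesis using le1 by linarith
qed

end

locale sys = param +
  fixes I :: "'i set" and w :: "'i \<Rightarrow> real" and \<rho> \<rho>' :: "'i \<Rightarrow> complex \<Rightarrow> complex" and i0 :: 'i
  assumes hom: "\<And>i. i\<in>I \<Longrightarrow> homeomorphism M M (\<rho> i) (\<rho>' i)"
    and wpos: "\<And>i. i\<in>I \<Longrightarrow> 0 \<le> w i" and wsum: "w summable_on I"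
    and i0I: "i0 \<in> I" and wi0: "w i0 > 0" and \<rho>i0: "\<And>x. x\<in>M \<Longrightarrow> \<rho> i0 x = x"
begin

definition mu :: "complex set \<Rightarrow> real" where
  "mu X = (\<Sum>\<^sub>\<infinity>i\<in>I. w i * Lm \<gamma> (\<rho> i) X)"

lemma rc: "i\<in>I \<Longrightarrow> continuous_on {0..1} (\<rho> i \<circ> \<gamma>)"
  by (metis \<gamma>cont \<gamma>img continuous_on_compose hom homeomorphism_cont1)

lemma preL_cpt: "i\<in>I \<Longrightarrow> closed X \<Longrightarrow> compact (preL \<gamma> (\<rho> i) X)"
  using preL_compact rc by blast

lemma preL_lm: "i\<in>I \<Longrightarrow> closed X \<Longrightarrow> preL \<gamma> (\<rho> i) X \<in> lmeasurable"
  using preL_cpt lmeasurable_compact by blast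

lemma Lm_nonneg: "0 \<le> Lm \<gamma> r X"
  by (simp add: Lm_def)

lemma Lm_le1: "i\<in>I \<Longrightarrow> closed X \<Longrightarrow> Lm \<gamma> (\<rho> i) X \<le> 1"
proof -
  assume a: "i\<in>I" "closed X"
  have "Lm \<gamma> (\<rho> i) X \<le> measure lebesgue {0..1::real}"
    unfolding Lm_def by (rule measure_mono_fmeasurable) (use a preL_lm in \<open>auto simp: preL_def\<close>)
  then show ?thesis by simp
qed

lemma Lm_mono: "i\<in>I \<Longrightarrow> closed Y \<Longrightarrow> X \<subseteq> Y \<Longrightarrow> closed X \<Longrightarrow> Lm \<gamma> (\<rho> i) X \<le> Lm \<gamma> (\<rho> i) Y"
  unfolding Lm_def by (rule measure_mono_fmeasurable[OF preL_mono]) (auto intro: preL_lm fmeasurableD)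

lemma summ: "closed X \<Longrightarrow> (\<lambda>i. w i * Lm \<gamma> (\<rho> i) X) summable_on I"
  by (rule summable_on_comparison_test[OF wsum])
     (auto simp: wpos Lm_nonneg Lm_le1 mult_left_le intro: mult_nonneg_nonneg)

lemma mu_nonneg: "0 \<le> mu X"
  unfolding mu_def by (rule infsum_nonneg) (simp add: wpos Lm_nonneg)

lemma mu_mono: "closed Y \<Longrightarrow> X \<subseteq> Y \<Longrightarrow> closed X \<Longrightarrow> mu X \<le> mu Y"
  unfolding mu_def by (rule infsum_mono[OF summ summ]) (auto simp: wpos Lm_mono mult_left_mono)

lemma preL_finite: "i\<in>I \<Longrightarrow> finite Z \<Longrightarrow> finite (preL \<gamma> (\<rho> i) Z)"
proof -
  assume a: "i\<in>I" "finite Z"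
  have "preL \<gamma> (\<rho> i) Z \<subseteq> (\<Union>z\<in>Z. {t\<in>{0..1}. \<gamma> t = \<rho>' i z})"
  proof
    fix t assume "t \<in> preL \<gamma> (\<rho> i) Z"
    then have t: "t \<in> {0..1}" "\<rho> i (\<gamma> t) \<in> Z" by (auto simp: preL_def)
    have "\<gamma> t \<in> M" using t \<gamma>img by auto
    then have "\<rho>' i (\<rho> i (\<gamma> t)) = \<gamma> t" using hom[OF a(1)] by (simp add: homeomorphism_apply1)
    then show "t \<in> (\<Union>z\<in>Z. {t\<in>{0..1}. \<gamma> t = \<rho>' i z})" using t by (intro UN_I[of "\<rho> i (\<gamma> t)"]) auto
  qed
  then show ?thesis using a \<gamma>fib by (meson finite_UN_I finite_subset)
qed

lemma Lm_finite: "i\<in>I \<Longrightarrow> finite Z \<Longrightarrow> Lm \<gamma> (\<rho> i) Z = 0"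
  unfolding Lm_def using preL_finite negligible_finite negligible_imp_measure0 by blast

lemma mu_finite: "finite Z \<Longrightarrow> mu Z = 0"
proof -
  assume "finite Z"
  then have "mu Z = (\<Sum>\<^sub>\<infinity>i\<in>I. 0)" unfolding mu_def by (intro infsum_cong) (simp add: Lm_finite)
  then show ?thesis by simp
qed

lemma Lm_Un:
  assumes "i\<in>I" "closed X" "closed Y" "finite (X \<inter> Y)"
  shows "Lm \<gamma> (\<rho> i) (X \<union> Y) = Lm \<gamma> (\<rho> i) X + Lm \<gamma> (\<rho> i) Y"
proof -
  have e1: "preL \<gamma> (\<rho> i) (X \<union> Y) = preL \<gamma> (\<rho> i) X \<union> preL \<gamma> (\<rho> i) Y"
    and e2: "preL \<gamma> (\<rho> i) X \<inter> preL \<gamma> (\<rho> i) Y = preL \<gamma> (\<rho> i) (X \<inter> Y)"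
    by (auto simp: preL_def)
  have "measure lebesgue (preL \<gamma> (\<rho> i) (X \<inter> Y)) = 0"
    using Lm_finite assms unfolding Lm_def by blast
  then show ?thesis unfolding Lm_def e1
    using measure_Un3[OF preL_lm[OF assms(1,2)] preL_lm[OF assms(1,3)]] e2 by simp
qed

lemma mu_Un:
  assumes "closed X" "closed Y" "finite (X \<inter> Y)"
  shows "mu (X \<union> Y) = mu X + mu Y"
  unfolding mu_def
  by (subst infsum_add[symmetric]) (use assms summ Lm_Un in \<open>auto simp: distrib_left intro!: infsum_cong\<close>)

lemma mu_ge: "closed X \<Longrightarrow> w i0 * Lm \<gamma> (\<rho> i0) X \<le> mu X"
  unfolding mu_def
  using finite_sum_le_infsum[OF summ, of X "{i0}"] i0I by (auto simp: wpos Lm_nonneg)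

lemma mu_arc_pos:
  assumes "0 \<le> a" "a < b" "b \<le> 1"
  shows "w i0 * (b - a) \<le> mu (\<gamma>`{a..b})"
proof -
  have cl: "closed (\<gamma>`{a..b})"
    using assms \<gamma>cont by (auto intro!: compact_imp_closed compact_continuous_image elim: continuous_on_subset)
  have "\<forall>t\<in>{0..1}. \<rho> i0 (\<gamma> t) = \<gamma> t" using \<rho>i0 \<gamma>img by auto
  then have "\<And>X. preL \<gamma> (\<rho> i0) X = preL \<gamma> id X"
    unfolding preL_def by auto
  then have "Lm \<gamma> (\<rho> i0) (\<gamma>`{a..b}) = b - a"
    using preL_id_arc assms unfolding Lm_def by simp
  then show ?thesis using mu_ge[OF cl] by simp
qed

lemma arc_closed: "0 \<le> a \<Longrightarrow> b \<le> 1 \<Longrightarrow> closed (\<gamma>`{a..b})"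
  using \<gamma>cont by (auto intro!: compact_imp_closed compact_continuous_image elim: continuous_on_subset)

lemma arc_sub: "0 \<le> a \<Longrightarrow> b \<le> 1 \<Longrightarrow> \<gamma>`{a..b} \<subseteq> M"
  using \<gamma>img by auto

lemma mu_T:
  assumes T: "homeomorphism M M T T'" and \<sigma>: "bij_betw \<sigma> I I"
    and Tc: "\<And>i x. i\<in>I \<Longrightarrow> x\<in>M \<Longrightarrow> T (\<rho> (\<sigma> i) x) = \<rho> i x"
    and wc: "\<And>i. i\<in>I \<Longrightarrow> w i \<le> exp e * w (\<sigma> i)"
    and K: "closed K" "K \<subseteq> M"
  shows "mu (T`K) \<le> exp e * mu K"
proof -
  have Lm_eq: "Lm \<gamma> (\<rho> i) (T`K) = Lm \<gamma> (\<rho> (\<sigma> i)) K" if i: "i\<in>I" for i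
  proof -
    have "\<sigma> i \<in> I" using \<sigma> i bij_betwE by blast
    have "preL \<gamma> (\<rho> i) (T`K) = preL \<gamma> (\<rho> (\<sigma> i)) K"
    proof -
      { fix t :: real assume t: "t\<in>{0..1}"
        then have gt: "\<gamma> t \<in> M" using \<gamma>img by auto
        then have r: "\<rho> (\<sigma> i) (\<gamma> t) \<in> M" using hom[OF \<open>\<sigma> i \<in> I\<close>] homeomorphism_image1 by blast
        have "\<rho> i (\<gamma> t) = T (\<rho> (\<sigma> i) (\<gamma> t))" using Tc[OF i gt] by simp
        moreover have "inj_on T M" using T by (metis homeomorphism_apply1 inj_on_inverseI)
        ultimately have "\<rho> i (\<gamma> t) \<in> T`K \<longleftrightarrow> \<rho> (\<sigma> i) (\<gamma> t) \<in> K"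
          using r K(2) by (auto dest: inj_onD) }
      then show ?thesis unfolding preL_def by auto
    qed
    then show ?thesis by (simp add: Lm_def)
  qed
  have "mu (T`K) = (\<Sum>\<^sub>\<infinity>i\<in>I. w i * Lm \<gamma> (\<rho> (\<sigma> i)) K)"
    unfolding mu_def by (intro infsum_cong) (simp add: Lm_eq)
  also have "\<dots> \<le> (\<Sum>\<^sub>\<infinity>i\<in>I. exp e * (w (\<sigma> i) * Lm \<gamma> (\<rho> (\<sigma> i)) K))"
  proof (rule infsum_mono)
    have s2: "(\<lambda>i. w (\<sigma> i) * Lm \<gamma> (\<rho> (\<sigma> i)) K) summable_on I"
      using summable_on_reindex_bij_betw[OF \<sigma>, of "\<lambda>i. w i * Lm \<gamma> (\<rho> i) K"] summ K by simp
    then show s3: "(\<lambda>i. exp e * (w (\<sigma> i) * Lm \<gamma> (\<rho> (\<sigma> i)) K)) summable_on I"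
      by (rule summable_on_cmult_right)
    show "(\<lambda>i. w i * Lm \<gamma> (\<rho> (\<sigma> i)) K) summable_on I"
      by (rule summable_on_comparison_test[OF s3])
         (use wc wpos Lm_nonneg \<sigma> bij_betwE in \<open>auto intro!: mult_right_mono mult_nonneg_nonneg simp: mult.assoc[symmetric]\<close>)
    show "w i * Lm \<gamma> (\<rho> (\<sigma> i)) K \<le> exp e * (w (\<sigma> i) * Lm \<gamma> (\<rho> (\<sigma> i)) K)" if "i\<in>I" for i
      using wc[OF that] Lm_nonneg[of "\<rho> (\<sigma> i)" K] by (simp add: mult_right_mono mult.assoc[symmetric])
  qed
  also have "\<dots> = exp e * (\<Sum>\<^sub>\<infinity>i\<in>I. w (\<sigma> i) * Lm \<gamma> (\<rho> (\<sigma> i)) K)"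
    by (rule infsum_cmult_right) (use summable_on_reindex_bij_betw[OF \<sigma>, of "\<lambda>i. w i * Lm \<gamma> (\<rho> i) K"] summ K in simp)
  also have "(\<Sum>\<^sub>\<infinity>i\<in>I. w (\<sigma> i) * Lm \<gamma> (\<rho> (\<sigma> i)) K) = mu K"
    unfolding mu_def using infsum_reindex_bij_betw[OF \<sigma>, of "\<lambda>i. w i * Lm \<gamma> (\<rho> i) K"] by simp
  finally show ?thesis .
qed

lemma infsum_split:
  fixes g :: "'i \<Rightarrow> real"
  assumes "g summable_on I" "finite F" "F \<subseteq> I"
  shows "infsum g I = sum g F + infsum g (I - F)"
proof -
  have "I = F \<union> (I - F)" using assms by auto
  then have "infsum g I = infsum g (F \<union> (I - F))" by simp
  also have "\<dots> = infsum g F + infsum g (I - F)"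
    by (rule infsum_Un_disjoint) (use assms summable_on_subset[OF assms(1), of "I - F"] in auto)
  finally show ?thesis using assms by simp
qed

lemma mu_small:
  assumes "\<eta> > 0"
  shows "\<exists>\<delta>>0. \<forall>a b. 0 \<le> a \<longrightarrow> a \<le> b \<longrightarrow> b \<le> 1 \<longrightarrow> b - a < \<delta> \<longrightarrow> mu (\<gamma>`{a..b}) \<le> \<eta>"
proof -
  obtain F where F: "finite F" "F \<subseteq> I" "dist (sum w F) (infsum w I) \<le> \<eta>/2"
    using infsum_finite_approximation[OF wsum, of "\<eta>/2"] assms by auto
  have tail: "infsum w (I - F) \<le> \<eta>/2"
    using infsum_split[OF wsum F(1,2)] F(3) by (simp add: dist_real_def)
  have wF: "0 \<le> sum w F" using F wpos by (auto intro: sum_nonneg)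
  define \<eta>' where "\<eta>' = \<eta> / (2 * (sum w F + 1))"
  have \<eta>': "\<eta>' > 0" using assms wF by (simp add: \<eta>'_def)
  obtain \<delta>1 where \<delta>1: "\<delta>1 > 0" "\<And>c. measure lebesgue {t\<in>{0..1}. \<gamma> t \<in> cball c \<delta>1} \<le> \<eta>'"
    using \<gamma>small[OF \<eta>'] by blast
  have uc: "\<exists>d>0. \<forall>s\<in>{0..1}. \<forall>t\<in>{0..1}. dist s t < d \<longrightarrow> dist (\<rho>' i (\<gamma> s)) (\<rho>' i (\<gamma> t)) < \<delta>1"
    if i: "i \<in> I" for i
  proof -
    have "continuous_on {0..1} (\<rho>' i \<circ> \<gamma>)"
      by (metis \<gamma>cont \<gamma>img continuous_on_compose hom[OF i] homeomorphism_cont2)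
    then have "uniformly_continuous_on {0..1} (\<rho>' i \<circ> \<gamma>)"
      by (simp add: compact_uniformly_continuous)
    then obtain d where "d > 0" "\<forall>x\<in>{0..1}. \<forall>x'\<in>{0..1}. dist x' x < d \<longrightarrow> dist (\<rho>' i (\<gamma> x')) (\<rho>' i (\<gamma> x)) < \<delta>1"
      using \<delta>1(1) unfolding uniformly_continuous_on_def by force
    then show ?thesis by blast
  qed
  then obtain d where d: "\<And>i. i\<in>I \<Longrightarrow> d i > 0 \<and> (\<forall>s\<in>{0..1}. \<forall>t\<in>{0..1}. dist s t < d i \<longrightarrow> dist (\<rho>' i (\<gamma> s)) (\<rho>' i (\<gamma> t)) < \<delta>1)"
    by metis
  define \<delta> where "\<delta> = Min (insert 1 (d ` F))"
  have \<delta>pos: "\<delta> > 0" unfolding \<delta>_def using F d by (auto simp: Min_gr_iff)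
  have \<delta>le: "\<And>i. i \<in> F \<Longrightarrow> \<delta> \<le> d i" unfolding \<delta>_def using F by auto
  show ?thesis
  proof (intro exI[of _ \<delta>] conjI allI impI \<delta>pos)
    fix a b :: real assume ab: "0 \<le> a" "a \<le> b" "b \<le> 1" "b - a < \<delta>"
    let ?A = "\<gamma>`{a..b}"
    have clA: "closed ?A" using ab arc_closed by auto
    have Lsmall: "Lm \<gamma> (\<rho> i) ?A \<le> \<eta>'" if i: "i \<in> F" for i
    proof -
      have iI: "i \<in> I" using i F by auto
      let ?B = "{t\<in>{0..1}. \<gamma> t \<in> cball (\<rho>' i (\<gamma> a)) \<delta>1}"
      have sub: "preL \<gamma> (\<rho> i) ?A \<subseteq> ?B"
      proof
        fix t assume "t \<in> preL \<gamma> (\<rho> i) ?A"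
        then obtain s where t: "t \<in> {0..1}" and s: "s \<in> {a..b}" "\<rho> i (\<gamma> t) = \<gamma> s"
          by (auto simp: preL_def)
        have "\<gamma> t \<in> M" using t \<gamma>img by auto
        then have "\<gamma> t = \<rho>' i (\<gamma> s)" using s hom[OF iI] by (metis homeomorphism_apply1)
        moreover have "dist a s < d i" using s ab \<delta>le[OF i] by (auto simp: dist_real_def)
        then have "dist (\<rho>' i (\<gamma> a)) (\<rho>' i (\<gamma> s)) < \<delta>1" using d[OF iI] s ab by auto
        ultimately show "t \<in> ?B" using t by (auto simp: dist_commute less_imp_le)
      qed
      have "?B = preL \<gamma> id (cball (\<rho>' i (\<gamma> a)) \<delta>1)" by (simp add: preL_def)
      then have Bc: "compact ?B" using preL_compact[of id \<gamma>] \<gamma>cont by auto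
      have "Lm \<gamma> (\<rho> i) ?A \<le> measure lebesgue ?B"
        unfolding Lm_def by (rule measure_mono_fmeasurable[OF sub])
          (use preL_lm[OF iI clA] Bc lmeasurable_compact in auto)
      then show ?thesis using \<delta>1(2) by (meson order_trans)
    qed
    have "mu ?A = (\<Sum>i\<in>F. w i * Lm \<gamma> (\<rho> i) ?A) + (\<Sum>\<^sub>\<infinity>i\<in>I-F. w i * Lm \<gamma> (\<rho> i) ?A)"
      unfolding mu_def by (rule infsum_split[OF summ[OF clA] F(1,2)])
    also have "(\<Sum>i\<in>F. w i * Lm \<gamma> (\<rho> i) ?A) \<le> (\<Sum>i\<in>F. w i * \<eta>')"
      by (rule sum_mono) (use F wpos Lsmall in \<open>auto intro: mult_left_mono\<close>)
    also have "(\<Sum>\<^sub>\<infinity>i\<in>I-F. w i * Lm \<gamma> (\<rho> i) ?A) \<le> (\<Sum>\<^sub>\<infinity>i\<in>I-F. w i)"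
      by (rule infsum_mono) (use summable_on_subset[OF summ[OF clA], of "I-F"] summable_on_subset[OF wsum, of "I-F"] Lm_le1[OF _ clA] wpos in
          \<open>auto intro: mult_left_le\<close>)
    also have "(\<Sum>i\<in>F. w i * \<eta>') = sum w F * \<eta>'" by (simp add: sum_distrib_right)
    also have "sum w F * \<eta>' \<le> \<eta>/2"
    proof -
      have "sum w F * \<eta>' = \<eta>/2 * (sum w F / (sum w F + 1))" using wF by (simp add: \<eta>'_def field_simps)
      also have "\<dots> \<le> \<eta>/2 * 1" using wF assms by (intro mult_left_mono) auto
      finally show ?thesis by simp
    qed
    finally show "mu ?A \<le> \<eta>" using tail by linarith
  qed
qed

definition phi :: "real \<Rightarrow> real" where "phi t = mu (\<gamma>`{0..t})"

lemma arc_split: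
  assumes "0 \<le> a" "a \<le> b" "b \<le> 1"
  shows "phi b = phi a + mu (\<gamma>`{a..b})"
proof -
  obtain F where F: "finite F" "{t\<in>{0..1}. \<gamma> t \<in> \<gamma>`{a..b}} \<subseteq> {a..b} \<union> F"
    using \<gamma>arc assms by blast
  have e: "\<gamma>`{0..b} = \<gamma>`{0..a} \<union> \<gamma>`{a..b}" using assms by (auto simp: image_Un[symmetric] ivl_disj_un)
  have "\<gamma>`{0..a} \<inter> \<gamma>`{a..b} \<subseteq> \<gamma>`({a} \<union> F)"
  proof
    fix z assume "z \<in> \<gamma>`{0..a} \<inter> \<gamma>`{a..b}"
    then obtain s where s: "s \<in> {0..a}" "z = \<gamma> s" "\<gamma> s \<in> \<gamma>`{a..b}" by auto
    then have "s \<in> {a..b} \<union> F" using F assms by auto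
    then have "s \<in> {a} \<union> F" using s by auto
    then show "z \<in> \<gamma>`({a} \<union> F)" using s by auto
  qed
  then have fin: "finite (\<gamma>`{0..a} \<inter> \<gamma>`{a..b})" using F by (meson finite_Un finite_imageI finite_insert finite.emptyI finite_subset)
  show ?thesis unfolding phi_def e
    by (rule mu_Un) (use assms arc_closed fin in auto)
qed

lemma phi0: "phi 0 = 0"
  unfolding phi_def by (simp add: mu_finite)

lemma phi_strict: "0 \<le> a \<Longrightarrow> a < b \<Longrightarrow> b \<le> 1 \<Longrightarrow> phi a < phi b"
  using arc_split[of a b] mu_arc_pos[of a b] wi0 by (smt (verit) mult_pos_pos)

lemma phi_mono: "0 \<le> a \<Longrightarrow> a \<le> b \<Longrightarrow> b \<le> 1 \<Longrightarrow> phi a \<le> phi b"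
  using phi_strict by (cases "a = b") (auto simp: le_less)

lemma phi1: "phi 1 = mu M"
  unfolding phi_def using \<gamma>img by simp

lemma muM_pos: "mu M > 0"
  using phi_strict[of 0 1] phi0 phi1 by simp

lemma phi_cont: "continuous_on {0..1} phi"
  unfolding continuous_on_iff
proof (intro ballI allI impI)
  fix x e :: real assume x: "x \<in> {0..1}" and e: "e > 0"
  obtain \<delta> where \<delta>: "\<delta> > 0" "\<And>a b. 0 \<le> a \<Longrightarrow> a \<le> b \<Longrightarrow> b \<le> 1 \<Longrightarrow> b - a < \<delta> \<Longrightarrow> mu (\<gamma>`{a..b}) \<le> e/2"
    using mu_small[of "e/2"] e by auto
  show "\<exists>d>0. \<forall>x'\<in>{0..1}. dist x' x < d \<longrightarrow> dist (phi x') (phi x) < e"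
  proof (intro exI[of _ \<delta>] conjI ballI impI \<delta>(1))
    fix y assume y: "y \<in> {0..1}" "dist y x < \<delta>"
    show "dist (phi y) (phi x) < e"
    proof (cases "y \<le> x")
      case True
      then show ?thesis using arc_split[of y x] \<delta>(2)[of y x] x y e mu_nonneg
        by (auto simp: dist_real_def)
    next
      case False
      then show ?thesis using arc_split[of x y] \<delta>(2)[of x y] x y e mu_nonneg
        by (auto simp: dist_real_def)
    qed
  qed
qed

definition Fn :: "real \<Rightarrow> real" where "Fn t = phi t / mu M"

lemma Fn_cont: "continuous_on {0..1} Fn"
  unfolding Fn_def by (intro continuous_intros phi_cont) (use muM_pos in auto)

lemma Fn0: "Fn 0 = 0" and Fn1: "Fn 1 = 1"
  using phi0 phi1 muM_pos by (auto simp: Fn_def)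

lemma Fn_strict: "0 \<le> a \<Longrightarrow> a < b \<Longrightarrow> b \<le> 1 \<Longrightarrow> Fn a < Fn b"
  using phi_strict muM_pos by (auto simp: Fn_def divide_strict_right_mono)

lemma Fn_mono: "0 \<le> a \<Longrightarrow> a \<le> b \<Longrightarrow> b \<le> 1 \<Longrightarrow> Fn a \<le> Fn b"
  using Fn_strict by (cases "a = b") (auto simp: le_less)

lemma Fn_inj: "inj_on Fn {0..1}"
  by (rule linorder_inj_onI) (use Fn_strict in \<open>auto simp: less_imp_neq\<close>)

lemma Fn_img: "Fn ` {0..1} = {0..1}"
proof
  show "Fn ` {0..1} \<subseteq> {0..1}" using Fn_mono[of 0] Fn_mono[of _ 1] Fn0 Fn1 by force
  show "{0..1} \<subseteq> Fn ` {0..1}"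
  proof
    fix y :: real assume "y \<in> {0..1}"
    then obtain x where "0 \<le> x" "x \<le> 1" "Fn x = y" using IVT'[of Fn 0 y 1] Fn0 Fn1 Fn_cont by auto
    then show "y \<in> Fn ` {0..1}" by auto
  qed
qed

lemma Fn_diff: "0 \<le> a \<Longrightarrow> a \<le> b \<Longrightarrow> b \<le> 1 \<Longrightarrow> Fn b - Fn a = mu (\<gamma>`{a..b}) / mu M"
  using arc_split[of a b] by (simp add: Fn_def diff_divide_distrib[symmetric])

end


interpretation pI: param complex_of_real unit_interval_c
proof
  show "continuous_on {0..1} complex_of_real" by (intro continuous_intros)
  show "complex_of_real ` {0..1} = unit_interval_c" by (simp add: unit_interval_c_def)
  show "finite {t \<in> {0..1}. complex_of_real t = z}" for z
    by (rule finite_subset[of _ "{Re z}"]) auto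
  show "\<exists>F. finite F \<and> {t \<in> {0..1}. complex_of_real t \<in> complex_of_real ` {a..b}} \<subseteq> {a..b} \<union> F"
    for a b :: real by (intro exI[of _ "{}"]) auto
  show "\<exists>\<delta>>0. \<forall>c. measure lebesgue {t \<in> {0..1}. complex_of_real t \<in> cball c \<delta>} \<le> \<eta>"
    if "\<eta> > 0" for \<eta>
  proof (intro exI[of _ "\<eta>/2"] conjI allI)
    show "\<eta>/2 > 0" using that by simp
    fix c
    let ?B = "{t \<in> {0..1}. complex_of_real t \<in> cball c (\<eta>/2)}"
    have "?B = preL complex_of_real id (cball c (\<eta>/2))" by (simp add: preL_def)
    then have "compact ?B" using preL_compact[of id complex_of_real] by (auto intro: continuous_intros)
    have sub: "?B \<subseteq> {Re c - \<eta>/2 .. Re c + \<eta>/2}"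
    proof
      fix t assume "t \<in> ?B"
      then have "cmod (c - complex_of_real t) \<le> \<eta>/2" by (auto simp: dist_norm)
      moreover have "\<bar>Re (c - complex_of_real t)\<bar> \<le> cmod (c - complex_of_real t)" by (rule abs_Re_le_cmod)
      ultimately show "t \<in> {Re c - \<eta>/2 .. Re c + \<eta>/2}" by auto
    qed
    have "measure lebesgue ?B \<le> measure lebesgue {Re c - \<eta>/2 .. Re c + \<eta>/2}"
      by (rule measure_mono_fmeasurable[OF sub]) (use \<open>compact ?B\<close> lmeasurable_compact in auto)
    also have "\<dots> = \<eta>" using that by simp
    finally show "measure lebesgue ?B \<le> \<eta>" .
  qed
qed

locale sysI = sys complex_of_real unit_interval_c I w \<rho> \<rho>' i0
  for I :: "'i set" and w \<rho> \<rho>' i0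
begin

definition hI :: "complex \<Rightarrow> complex" where "hI z = complex_of_real (Fn (Re z))"

lemma UI: "z \<in> unit_interval_c \<longleftrightarrow> Im z = 0 \<and> Re z \<in> {0..1}"
  by (auto simp: unit_interval_c_def complex_eq_iff)

lemma hI_homeo: "\<exists>h'. homeomorphism unit_interval_c unit_interval_c hI h'"
proof (rule homeomorphism_compact)
  show "compact unit_interval_c" using pI.M_compact .
  have ReM: "Re ` unit_interval_c \<subseteq> {0..1}" by (auto simp: UI)
  have "continuous_on unit_interval_c Re" by (intro continuous_intros)
  then have "continuous_on unit_interval_c (Fn \<circ> Re)"
    using continuous_on_compose[of unit_interval_c Re Fn] continuous_on_subset[OF Fn_cont ReM] by blast
  then have "continuous_on unit_interval_c (\<lambda>x. complex_of_real ((Fn \<circ> Re) x))"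
    by (rule continuous_on_of_real)
  then show "continuous_on unit_interval_c hI" by (simp add: hI_def o_def)
  have "hI ` (complex_of_real`{0..1}) = complex_of_real ` (Fn ` {0..1})" by (simp add: image_image hI_def)
  then show "hI ` unit_interval_c = unit_interval_c" using Fn_img unfolding unit_interval_c_def by simp
  show "inj_on hI unit_interval_c"
  proof (rule inj_onI)
    fix x y assume xy: "x \<in> unit_interval_c" "y \<in> unit_interval_c" "hI x = hI y"
    then have "Fn (Re x) = Fn (Re y)" by (simp add: hI_def)
    then have "Re x = Re y" using Fn_inj xy(1,2) unfolding UI inj_on_def by blast
    then show "x = y" using xy(1,2) unfolding UI by (simp add: complex_eq_iff)
  qed
qed

lemma conn_sub:
  assumes "connected K" "K \<subseteq> unit_interval_c" "complex_of_real a \<in> K" "complex_of_real b \<in> K"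
  shows "complex_of_real ` {a..b} \<subseteq> K"
proof -
  have "continuous_on K Re" by (rule continuous_on_Re[OF continuous_on_id])
  then have "connected (Re ` K)" using connected_continuous_image assms(1) by blast
  moreover have "a \<in> Re ` K" using assms(3) by (metis Re_complex_of_real image_eqI)
  moreover have "b \<in> Re ` K" using assms(4) by (metis Re_complex_of_real image_eqI)
  ultimately have "{a..b} \<subseteq> Re ` K" by (rule connected_contains_Icc)
  moreover have "\<And>x. x \<in> Re ` K \<Longrightarrow> complex_of_real x \<in> K"
  proof -
    fix x assume "x \<in> Re ` K"
    then obtain z where z: "z \<in> K" "x = Re z" by blast
    then have "Im z = 0" using assms(2) UI by blast
    then have "z = complex_of_real x" using z by (simp add: complex_eq_iff)
    then show "complex_of_real x \<in> K" using z by simp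
  qed
  ultimately show ?thesis by auto
qed

lemma hI_lip:
  assumes hh: "homeomorphism unit_interval_c unit_interval_c hI h'"
    and T: "homeomorphism unit_interval_c unit_interval_c T T'" and \<sigma>: "bij_betw \<sigma> I I"
    and Tc: "\<And>i x. i\<in>I \<Longrightarrow> x\<in>unit_interval_c \<Longrightarrow> T (\<rho> (\<sigma> i) x) = \<rho> i x"
    and wc: "\<And>i. i\<in>I \<Longrightarrow> w i \<le> exp e * w (\<sigma> i)"
  shows "lipschitz_wrt dist unit_interval_c (exp e) (hI \<circ> T \<circ> h')"
proof -
  have key: "dist (hI (T (h' x))) (hI (T (h' y))) \<le> exp e * dist x y"
    if x: "x \<in> unit_interval_c" and y: "y \<in> unit_interval_c" and le: "Re (h' x) \<le> Re (h' y)" for x y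
  proof -
    define a where "a = Re (h' x)"
    define b where "b = Re (h' y)"
    have px: "h' x \<in> unit_interval_c" "h' y \<in> unit_interval_c"
      using hh x y homeomorphism_image2 by blast+
    then have ab: "0 \<le> a" "a \<le> b" "b \<le> 1" using le by (auto simp: UI a_def b_def)
    have pxa: "h' x = complex_of_real a" "h' y = complex_of_real b"
      using px by (auto simp: UI complex_eq_iff a_def b_def)
    have "x = hI (h' x)" "y = hI (h' y)" using hh x y by (auto simp: homeomorphism_apply2)
    then have xy: "x = complex_of_real (Fn a)" "y = complex_of_real (Fn b)" by (auto simp: hI_def pxa)
    have dxy: "dist x y = mu (complex_of_real`{a..b}) / mu unit_interval_c"
      using Fn_diff[OF ab] Fn_mono[OF ab] by (simp add: xy dist_real_def dist_of_real)
    let ?A = "complex_of_real`{a..b}"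
    let ?K = "T ` ?A"
    have Asub: "?A \<subseteq> unit_interval_c" by (auto simp: UI ab) (use ab in auto)
    have contT: "continuous_on unit_interval_c T" using T homeomorphism_cont1 by blast
    have Ac: "compact ?A"
      by (rule compact_continuous_image) (auto intro: continuous_intros)
    have Kc: "compact ?K"
      by (rule compact_continuous_image[OF continuous_on_subset[OF contT Asub] Ac])
    have Aconn: "connected ?A"
      by (rule connected_continuous_image) (auto intro: continuous_intros)
    have Kconn: "connected ?K"
      by (rule connected_continuous_image[OF continuous_on_subset[OF contT Asub] Aconn])
    have Ksub: "?K \<subseteq> unit_interval_c" using Asub T homeomorphism_image1 by blast
    define a' where "a' = Re (T (h' x))"
    define b' where "b' = Re (T (h' y))"
    have Tin: "T (h' x) \<in> ?K" "T (h' y) \<in> ?K" using ab by (auto simp: pxa)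
    have TM: "T (h' x) \<in> unit_interval_c" "T (h' y) \<in> unit_interval_c" using Tin Ksub by blast+
    have Tre: "T (h' x) = complex_of_real a'" "T (h' y) = complex_of_real b'"
      using TM unfolding UI by (auto simp: complex_eq_iff a'_def b'_def)
    have a'b': "a' \<in> {0..1}" "b' \<in> {0..1}" using TM unfolding UI by (auto simp: a'_def b'_def)
    have bound: "dist (hI (T (h' x))) (hI (T (h' y))) \<le> mu ?K / mu unit_interval_c"
    proof -
      have gen: "dist (complex_of_real (Fn u)) (complex_of_real (Fn v)) \<le> mu ?K / mu unit_interval_c"
        if uv: "u \<in> {0..1}" "v \<in> {0..1}" "u \<le> v" "complex_of_real u \<in> ?K" "complex_of_real v \<in> ?K" for u v
      proof -
        have sub: "complex_of_real ` {u..v} \<subseteq> ?K" using conn_sub[OF Kconn Ksub uv(4,5)] .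
        have "mu (complex_of_real ` {u..v}) \<le> mu ?K"
          by (rule mu_mono[OF compact_imp_closed[OF Kc] sub]) (use uv arc_closed in auto)
        then show ?thesis using Fn_diff[of u v] Fn_mono[of u v] uv muM_pos
          by (simp add: dist_of_real dist_real_def divide_right_mono)
      qed
      show ?thesis
      proof (cases "a' \<le> b'")
        case True
        then show ?thesis using gen[of a' b'] a'b' Tin by (simp add: hI_def Tre)
      next
        case False
        then show ?thesis using gen[of b' a'] a'b' Tin by (simp add: hI_def Tre dist_commute)
      qed
    qed
    have "mu ?K \<le> exp e * mu ?A"
      by (rule mu_T[OF T \<sigma> Tc wc]) (use Asub ab arc_closed in auto)
    then have "mu ?K / mu unit_interval_c \<le> exp e * (mu ?A / mu unit_interval_c)"
      using muM_pos by (simp add: divide_right_mono)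
    then show ?thesis using bound dxy by simp
  qed
  show ?thesis unfolding lipschitz_wrt_def
  proof (intro ballI)
    fix x y assume x: "x \<in> unit_interval_c" and y: "y \<in> unit_interval_c"
    show "dist ((hI \<circ> T \<circ> h') x) ((hI \<circ> T \<circ> h') y) \<le> exp e * dist x y"
    proof (cases "Re (h' x) \<le> Re (h' y)")
      case True then show ?thesis using key[OF x y] by simp
    next
      case False then show ?thesis using key[OF y x] by (simp add: dist_commute)
    qed
  qed
qed

end

definition gc :: "real \<Rightarrow> complex" where "gc t = cis (2 * pi * t)"
definition th :: "complex \<Rightarrow> real" where "th z = Arg2pi z / (2 * pi)"

lemma gc_norm [simp]: "norm (gc t) = 1" by (simp add: gc_def)

lemma gc_circle [simp]: "gc t \<in> circle" by (simp add: circle_def)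

lemma circle_iff: "z \<in> circle \<longleftrightarrow> norm z = 1" by (simp add: circle_def)

lemma th_range: "0 \<le> th z" "th z < 1"
  using Arg2pi[of z] by (auto simp: th_def divide_simps)

lemma gc_th: "z \<in> circle \<Longrightarrow> gc (th z) = z"
  using complex_norm_eq_1_exp[of z] by (simp add: gc_def th_def circle_iff cis_conv_exp mult.commute)

lemma th_gc: "0 \<le> t \<Longrightarrow> t < 1 \<Longrightarrow> th (gc t) = t"
proof -
  assume t: "0 \<le> t" "t < 1"
  have "Arg2pi (exp (\<i> * complex_of_real (2 * pi * t))) = Im (\<i> * complex_of_real (2 * pi * t))"
    by (rule Arg2pi_exp) (use t in auto)
  then have "Arg2pi (exp (\<i> * complex_of_real (2 * pi * t))) = 2 * pi * t" by simp
  then show ?thesis by (simp add: gc_def th_def cis_conv_exp)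
qed

lemma gc_shift: "gc (t + 1) = gc t" "gc (t - 1) = gc t"
  by (simp_all add: gc_def cis.ctr complex_eq_iff distrib_left cos_add sin_add right_diff_distrib cos_diff sin_diff)

lemma gc_0_1: "gc 1 = gc 0" using gc_shift(1)[of 0] by simp

lemma gc_div: "gc t / gc s = gc (t - s)"
  by (simp add: gc_def cis_divide right_diff_distrib)

lemma half_range: "-1/2 < y \<Longrightarrow> y \<le> 1/2 \<Longrightarrow> 2 * pi * y \<in> {-pi<..pi}"
proof -
  assume y: "-1/2 < y" "y \<le> 1/2"
  have "0 < 2 * pi * (y + 1/2)" using y pi_gt_zero by (intro mult_pos_pos) auto
  moreover have "0 \<le> 2 * pi * (1/2 - y)" using y pi_gt_zero by (intro mult_nonneg_nonneg) auto
  ultimately show ?thesis by (auto simp: algebra_simps)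
qed

lemma cd_formula:
  assumes "\<bar>x\<bar> \<le> 1"
  shows "\<bar>Arg (gc x)\<bar> = 2 * pi * min \<bar>x\<bar> (1 - \<bar>x\<bar>)"
proof -
  consider "-1/2 < x" "x \<le> 1/2" | "1/2 < x" | "x \<le> -1/2" by linarith
  then show ?thesis
  proof cases
    case 1
    then have "Arg (gc x) = 2 * pi * x" unfolding gc_def by (intro Arg_cis half_range) auto
    then show ?thesis using 1 by (auto simp: abs_mult min_def)
  next
    case 2
    then have "Arg (gc (x - 1)) = 2 * pi * (x - 1)" unfolding gc_def using assms by (intro Arg_cis half_range) auto
    then show ?thesis using 2 assms by (auto simp: abs_mult min_def gc_shift)
  next
    case 3
    then have "Arg (gc (x + 1)) = 2 * pi * (x + 1)" unfolding gc_def using assms by (intro Arg_cis half_range) auto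
    then show ?thesis using 3 assms by (auto simp: abs_mult min_def gc_shift)
  qed
qed

lemma circ_dist_gc:
  assumes "t \<in> {0..1}" "s \<in> {0..1}"
  shows "circ_dist (gc t) (gc s) = 2 * pi * min \<bar>t - s\<bar> (1 - \<bar>t - s\<bar>)"
  unfolding circ_dist_def gc_div using assms by (intro cd_formula) auto

lemma circ_dist_sym: "z \<in> circle \<Longrightarrow> w \<in> circle \<Longrightarrow> circ_dist z w = circ_dist w z"
  using circ_dist_gc[of "th z" "th w"] circ_dist_gc[of "th w" "th z"] th_range[of z] th_range[of w]
  by (simp add: gc_th abs_minus_commute)

lemma gc_eq_cases:
  assumes "t \<in> {0..1}" "s \<in> {0..1}" "gc t = gc s"
  shows "t = s \<or> \<bar>t - s\<bar> = 1"
proof -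
  have "gc s \<noteq> 0" using gc_norm[of s] by (metis norm_zero zero_neq_one)
  then have "circ_dist (gc t) (gc s) = 0" using assms by (simp add: circ_dist_def)
  then have "min \<bar>t - s\<bar> (1 - \<bar>t - s\<bar>) = 0" using circ_dist_gc[OF assms(1,2)] by simp
  then show ?thesis by (auto simp: min_def split: if_splits)
qed

lemma gc_inj: "t \<in> {0..<1} \<Longrightarrow> s \<in> {0..<1} \<Longrightarrow> gc t = gc s \<Longrightarrow> t = s"
  using gc_eq_cases[of t s] by auto

lemma circ_dist_cont:
  assumes "\<eta> > 0"
  shows "\<exists>\<delta>>0. \<forall>z w. z \<in> circle \<longrightarrow> w \<in> circle \<longrightarrow> dist z w < \<delta> \<longrightarrow> circ_dist z w < \<eta>"
proof -
  have "isCont Arg 1" by (rule continuous_at_Arg) (auto simp: complex_nonpos_Reals_iff)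
  then obtain \<delta> where \<delta>: "\<delta> > 0" "\<And>u. dist u 1 < \<delta> \<Longrightarrow> dist (Arg u) (Arg 1) < \<eta>"
    using assms unfolding continuous_at_eps_delta by blast
  show ?thesis
  proof (intro exI[of _ \<delta>] conjI allI impI \<delta>(1))
    fix z w assume zw: "z \<in> circle" "w \<in> circle" "dist z w < \<delta>"
    have "w \<noteq> 0" using zw by (auto simp: circle_iff)
    have "dist (z / w) 1 = norm ((z - w) / w)" using \<open>w \<noteq> 0\<close> by (simp add: dist_norm diff_divide_distrib)
    also have "\<dots> = dist z w" using zw by (simp add: norm_divide circle_iff dist_norm)
    finally show "circ_dist z w < \<eta>" using \<delta>(2)[of "z/w"] zw by (simp add: circ_dist_def dist_real_def)
  qed
qed

lemma circle_gc_img: "gc ` {0..1} = circle"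
proof
  show "gc ` {0..1} \<subseteq> circle" by auto
  show "circle \<subseteq> gc ` {0..1}"
  proof
    fix z assume "z \<in> circle"
    then have "z = gc (th z)" by (simp add: gc_th)
    then show "z \<in> gc ` {0..1}" using th_range[of z] by (intro image_eqI) auto
  qed
qed

lemma gc_cont [continuous_intros]: "continuous_on S gc"
  unfolding gc_def by (intro continuous_intros)

interpretation pC: param gc circle
proof
  show "continuous_on {0..1} gc" by (intro continuous_intros)
  show "gc ` {0..1} = circle" by (rule circle_gc_img)
  show "finite {t \<in> {0..1}. gc t = z}" for z
  proof (cases "\<exists>t0\<in>{0..1}. gc t0 = z")
    case True
    then obtain t0 where t0: "t0 \<in> {0..1}" "gc t0 = z" by blast
    have "{t \<in> {0..1}. gc t = z} \<subseteq> {t0, t0 + 1, t0 - 1}"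
    proof
      fix t assume "t \<in> {t \<in> {0..1}. gc t = z}"
      then have "t = t0 \<or> \<bar>t - t0\<bar> = 1" using gc_eq_cases[of t t0] t0 by auto
      then show "t \<in> {t0, t0 + 1, t0 - 1}" by (cases "t \<le> t0") auto
    qed
    then show ?thesis by (rule finite_subset) auto
  next
    case False
    then have e: "{t \<in> {0..1}. gc t = z} = {}" by auto
    show ?thesis by (subst e) (rule finite.emptyI)
  qed
  show "\<exists>F. finite F \<and> {t \<in> {0..1}. gc t \<in> gc ` {a..b}} \<subseteq> {a..b} \<union> F"
    if "0 \<le> a" "a \<le> b" "b \<le> 1" for a b
  proof (intro exI[of _ "{0,1}"] conjI)
    show "{t \<in> {0..1}. gc t \<in> gc ` {a..b}} \<subseteq> {a..b} \<union> {0, 1}"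
    proof
      fix t assume "t \<in> {t \<in> {0..1}. gc t \<in> gc ` {a..b}}"
      then obtain s where ts: "t \<in> {0..1}" "s \<in> {a..b}" "gc t = gc s" by auto
      then have "t = s \<or> \<bar>t - s\<bar> = 1" using gc_eq_cases[of t s] that by auto
      then show "t \<in> {a..b} \<union> {0, 1}" using ts that by (auto simp: abs_if split: if_splits)
    qed
  qed simp
  show "\<exists>\<delta>>0. \<forall>c. measure lebesgue {t \<in> {0..1}. gc t \<in> cball c \<delta>} \<le> \<eta>" if "\<eta> > 0" for \<eta>
  proof -
    define \<kappa> where "\<kappa> = \<eta> / 4"
    have \<kappa>: "\<kappa> > 0" using that by (simp add: \<kappa>_def)
    obtain \<delta> where \<delta>: "\<delta> > 0" "\<And>z w. z \<in> circle \<Longrightarrow> w \<in> circle \<Longrightarrow> dist z w < \<delta> \<Longrightarrow> circ_dist z w < 2 * pi * \<kappa>"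
      using circ_dist_cont[of "2 * pi * \<kappa>"] \<kappa> by auto
    show ?thesis
    proof (intro exI[of _ "\<delta>/3"] conjI allI)
      show "\<delta>/3 > 0" using \<delta> by simp
      fix c
      let ?S = "{t \<in> {0..1}. gc t \<in> cball c (\<delta>/3)}"
      have "?S = preL gc id (cball c (\<delta>/3))" by (simp add: preL_def)
      then have Sc: "compact ?S" using preL_compact[of id gc] by (auto intro: continuous_intros)
      show "measure lebesgue ?S \<le> \<eta>"
      proof (cases "?S = {}")
        case True show ?thesis unfolding True using that by simp
      next
        case False
        then obtain t0 where t0: "t0 \<in> ?S" by blast
        have sub: "?S \<subseteq> {t0 - \<kappa>..t0 + \<kappa>} \<union> {0..\<kappa>} \<union> {1 - \<kappa>..1}"
        proof
          fix t assume t: "t \<in> ?S"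
          have "dist (gc t) (gc t0) \<le> dist (gc t) c + dist c (gc t0)" by (rule dist_triangle)
          also have "\<dots> < \<delta>" using t t0 \<delta>(1) by (auto simp: dist_commute)
          finally have "circ_dist (gc t) (gc t0) < 2 * pi * \<kappa>" using \<delta>(2) by auto
          then have "min \<bar>t - t0\<bar> (1 - \<bar>t - t0\<bar>) < \<kappa>" using circ_dist_gc[of t t0] t t0 by auto
          then show "t \<in> {t0 - \<kappa>..t0 + \<kappa>} \<union> {0..\<kappa>} \<union> {1 - \<kappa>..1}"
            using t t0 by (auto simp: min_def abs_if split: if_splits)
        qed
        have "measure lebesgue ?S \<le> measure lebesgue ({t0 - \<kappa>..t0 + \<kappa>} \<union> {0..\<kappa>} \<union> {1 - \<kappa>..1})"
          by (rule measure_mono_fmeasurable[OF sub]) (use Sc lmeasurable_compact in auto)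
        also have "\<dots> \<le> measure lebesgue ({t0 - \<kappa>..t0 + \<kappa>} \<union> {0..\<kappa>}) + measure lebesgue {1 - \<kappa>..1::real}"
          by (rule measure_Un_le) auto
        also have "measure lebesgue ({t0 - \<kappa>..t0 + \<kappa>} \<union> {0..\<kappa>}) \<le> measure lebesgue {t0 - \<kappa>..t0 + \<kappa>} + measure lebesgue {0..\<kappa>::real}"
          by (rule measure_Un_le) auto
        finally show ?thesis using \<kappa> by (simp add: \<kappa>_def)
      qed
    qed
  qed
qed



lemma cont_via_quotient:
  fixes f :: "'a::metric_space \<Rightarrow> 'b::metric_space" and g :: "'b \<Rightarrow> 'c::metric_space"
  assumes "compact S" "continuous_on S f" "f ` S = T" "continuous_on S (g \<circ> f)"
  shows "continuous_on T g"
proof -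
  have q: "quotient_map (top_of_set S) (top_of_set T) f"
  proof (rule continuous_imp_quotient_map)
    show "continuous_map (top_of_set S) (top_of_set T) f"
      using assms by (simp add: continuous_map_in_subtopology image_subset_iff_funcset[symmetric])
    show "compact_space (top_of_set S)" using assms by (simp add: compact_space_subtopology)
    show "Hausdorff_space (top_of_set T)" by (simp add: Hausdorff_space_subtopology)
    show "f ` topspace (top_of_set S) = topspace (top_of_set T)" using assms by simp
  qed
  have "continuous_map (top_of_set S) euclidean (g \<circ> f)" using assms by simp
  then have "continuous_map (top_of_set T) euclidean g" by (rule continuous_compose_quotient_map[OF q])
  then show ?thesis by simp
qed

lemma Arg_unit_inj:
  assumes "norm u = 1" "norm v = 1" "Arg u = Arg v"
  shows "u = v"
proof -
  have "u \<noteq> 0" "v \<noteq> 0" using assms by auto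
  have "sgn u = u" "sgn v = v" using assms(1,2) by (simp_all add: sgn_div_norm)
  then have "cis (Arg u) = u" "cis (Arg v) = v" using cis_Arg \<open>u \<noteq> 0\<close> \<open>v \<noteq> 0\<close> by metis+
  then show ?thesis using assms(3) by metis
qed

lemma circ_conn:
  assumes K: "connected K" "K \<subseteq> circle" and uv: "0 \<le> u" "u \<le> v" "v < 1"
    and in_K: "gc u \<in> K" "gc v \<in> K"
  shows "gc ` {u..v} \<subseteq> K \<or> gc ` {v..1} \<union> gc ` {0..u} \<subseteq> K"
proof (rule ccontr)
  assume "\<not> ?thesis"
  then obtain s1 s2 where s1: "s1 \<in> {u..v}" "gc s1 \<notin> K" and s2': "s2 \<in> {v..1} \<union> {0..u}" "gc s2 \<notin> K"
    by blast
  have s1': "u < s1" "s1 < v" using s1 in_K by (auto simp: le_less)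
  obtain s where s: "s \<in> {v<..<1} \<union> {0..<u}" "gc s \<notin> K"
  proof (cases "s2 = 1")
    case True
    then have "gc 0 \<notin> K" using s2' gc_0_1 by simp
    then have "u \<noteq> 0" using in_K by auto
    then show ?thesis using that[of 0] \<open>gc 0 \<notin> K\<close> uv by auto
  next
    case False
    then have "s2 \<noteq> v" "s2 \<noteq> u" using s2' in_K by auto
    then show ?thesis using that[of s2] s2' False by auto
  qed
  define w where "w = gc s"
  define \<Phi> where "\<Phi> z = Arg (- z / w)" for z
  have wn: "norm w = 1" by (simp add: w_def)
  then have w0: "w \<noteq> 0" by auto
  have notw: "z \<noteq> w" if "z \<in> K" for z using that s by (auto simp: w_def)
  have cont: "continuous_on K \<Phi>"
  proof (rule continuous_at_imp_continuous_on, rule ballI)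
    fix z assume z: "z \<in> K"
    have nz: "norm z = 1" using z K by (auto simp: circle_iff)
    have "- z / w \<notin> \<real>\<^sub>\<le>\<^sub>0"
    proof
      assume "- z / w \<in> \<real>\<^sub>\<le>\<^sub>0"
      then obtain r where r: "- z / w = of_real r" "r \<le> 0" by (auto simp: complex_nonpos_Reals_iff complex_eq_iff)
      have "norm (- z / w) = 1" using nz wn by (simp add: norm_divide)
      then have "\<bar>r\<bar> = 1" using r(1) by (metis norm_of_real)
      then have "r = -1" using r(2) by linarith
      then have "z = w" using r w0 by (simp add: field_simps)
      then show False using notw z by auto
    qed
    then have "isCont Arg (- z / w)" by (rule continuous_at_Arg)
    moreover have "isCont (\<lambda>z. - z / w) z" using w0 by (intro continuous_intros) auto
    ultimately show "isCont \<Phi> z" unfolding \<Phi>_def using isCont_o2 by blast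
  qed
  have lin: "\<exists>c. \<forall>t \<in> {u, s1, v}. \<Phi> (gc t) = 2 * pi * t + c"
  proof (cases "s \<in> {v<..<1}")
    case True
    have "\<Phi> (gc t) = 2 * pi * t + (pi - 2 * pi * s)" if t: "t \<in> {u, s1, v}" for t
    proof -
      have tt: "0 \<le> t" "t < s" using t True uv s1' by auto
      have "- gc t / w = cis (2 * pi * (t - s) + pi)"
        by (simp add: w_def gc_div[symmetric] gc_def minus_cis[symmetric] cis_divide right_diff_distrib)
      moreover have "2 * pi * (t - s) + pi \<in> {-pi<..pi}"
        using half_range[of "t - s + 1/2"] tt True by (auto simp: algebra_simps)
      ultimately show ?thesis unfolding \<Phi>_def by (simp add: Arg_cis algebra_simps)
    qed
    then show ?thesis by blast
  next
    case False
    then have sF: "0 \<le> s" "s < u" using s by auto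
    have "\<Phi> (gc t) = 2 * pi * t + (- pi - 2 * pi * s)" if t: "t \<in> {u, s1, v}" for t
    proof -
      have tt: "s < t" "t < 1" using t sF uv s1' by auto
      have "- gc t / w = cis (2 * pi * (t - s) - pi)"
        by (simp add: w_def gc_div[symmetric] gc_def minus_cis'[symmetric] cis_divide right_diff_distrib)
      moreover have "2 * pi * (t - s) - pi \<in> {-pi<..pi}"
        using half_range[of "t - s - 1/2"] tt sF by (auto simp: algebra_simps)
      ultimately show ?thesis unfolding \<Phi>_def by (simp add: Arg_cis algebra_simps)
    qed
    then show ?thesis by blast
  qed
  then obtain c where c: "\<And>t. t \<in> {u, s1, v} \<Longrightarrow> \<Phi> (gc t) = 2 * pi * t + c" by blast
  have "connected (\<Phi> ` K)" by (rule connected_continuous_image[OF cont K(1)])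
  moreover have "\<Phi> (gc u) \<in> \<Phi> ` K" "\<Phi> (gc v) \<in> \<Phi> ` K" using in_K by auto
  ultimately have "{\<Phi> (gc u)..\<Phi> (gc v)} \<subseteq> \<Phi> ` K" by (rule connected_contains_Icc)
  moreover have "\<Phi> (gc s1) \<in> {\<Phi> (gc u)..\<Phi> (gc v)}" using c[of u] c[of v] c[of s1] s1' pi_gt_zero by auto
  ultimately obtain z where z: "z \<in> K" "\<Phi> z = \<Phi> (gc s1)" by auto
  have "- z / w = - gc s1 / w"
    by (rule Arg_unit_inj) (use z K wn in \<open>auto simp: \<Phi>_def norm_divide circle_iff\<close>)
  then have "z = gc s1" using w0 by (simp add: field_simps)
  then show False using z s1 by auto
qed


context sys
begin

lemma mu_compl:
  assumes "0 \<le> a" "a \<le> b" "b \<le> 1"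
  shows "mu (\<gamma>`{b..1} \<union> \<gamma>`{0..a}) = mu (\<gamma>`{b..1}) + mu (\<gamma>`{0..a})"
proof -
  obtain F where F: "finite F" "{t\<in>{0..1}. \<gamma> t \<in> \<gamma>`{b..1}} \<subseteq> {b..1} \<union> F"
    using \<gamma>arc[of b 1] assms by auto
  have "\<gamma>`{b..1} \<inter> \<gamma>`{0..a} \<subseteq> \<gamma>`({a} \<union> F)"
  proof
    fix z assume z: "z \<in> \<gamma>`{b..1} \<inter> \<gamma>`{0..a}"
    then obtain s where s0: "s \<in> {0..a}" "z = \<gamma> s" by auto
    then have s: "s \<in> {0..a}" "z = \<gamma> s" "\<gamma> s \<in> \<gamma>`{b..1}" using z by auto
    then have "s \<in> {b..1} \<union> F" using F assms by auto
    then have "s \<in> {a} \<union> F" using s assms by auto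
    then show "z \<in> \<gamma>`({a} \<union> F)" using s by auto
  qed
  then have fin: "finite (\<gamma>`{b..1} \<inter> \<gamma>`{0..a})" using F
    by (meson finite_Un finite_imageI finite_insert finite.emptyI finite_subset)
  show ?thesis by (rule mu_Un) (use assms arc_closed fin in auto)
qed

lemma Fn_alt: "Fn a = mu (\<gamma>`{0..a}) / mu M"
  by (simp add: Fn_def phi_def)

end

locale sysC = sys gc circle I w \<rho> \<rho>' i0
  for I :: "'i set" and w \<rho> \<rho>' i0
begin

definition hC :: "complex \<Rightarrow> complex" where "hC z = gc (Fn (th z))"

lemma Fn_range: "0 \<le> t \<Longrightarrow> t < 1 \<Longrightarrow> 0 \<le> Fn t \<and> Fn t < 1"
  using Fn_mono[of 0 t] Fn_strict[of t 1] Fn0 Fn1 by auto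

lemma Fn_range': "0 \<le> t \<Longrightarrow> t \<le> 1 \<Longrightarrow> 0 \<le> Fn t \<and> Fn t \<le> 1"
  using Fn_mono[of 0 t] Fn_mono[of t 1] Fn0 Fn1 by auto

lemma hC_gc: "0 \<le> t \<Longrightarrow> t \<le> 1 \<Longrightarrow> hC (gc t) = gc (Fn t)"
proof -
  assume t: "0 \<le> t" "t \<le> 1"
  show ?thesis
  proof (cases "t = 1")
    case True
    then show ?thesis using gc_0_1 th_gc[of 0] Fn0 Fn1 by (simp add: hC_def)
  next
    case False
    then show ?thesis using t th_gc[of t] by (simp add: hC_def)
  qed
qed

lemma hC_homeo: "\<exists>h'. homeomorphism circle circle hC h'"
proof (rule homeomorphism_compact)
  show "compact circle" using pC.M_compact .
  have "continuous_on {0..1} (hC \<circ> gc)"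
  proof -
    have "continuous_on {0..1} (gc \<circ> Fn)" by (intro continuous_on_compose Fn_cont continuous_intros)
    moreover have "\<And>t. t \<in> {0..1} \<Longrightarrow> (gc \<circ> Fn) t = (hC \<circ> gc) t" using hC_gc by auto
    ultimately show ?thesis using continuous_on_cong by blast
  qed
  then show "continuous_on circle hC"
    by (rule cont_via_quotient[OF compact_Icc gc_cont circle_gc_img])
  show "hC ` circle = circle"
  proof
    show "hC ` circle \<subseteq> circle" by (auto simp: hC_def)
    show "circle \<subseteq> hC ` circle"
    proof
      fix z assume z: "z \<in> circle"
      have "th z \<in> {0..1}" using th_range[of z] by auto
      then obtain t where t: "t \<in> {0..1}" "Fn t = th z" using Fn_img by (metis imageE)
      have "hC (gc t) = z" using t hC_gc gc_th[OF z] by auto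
      then show "z \<in> hC ` circle" by (metis gc_circle image_eqI)
    qed
  qed
  show "inj_on hC circle"
  proof (rule inj_onI)
    fix z z' assume zz: "z \<in> circle" "z' \<in> circle" "hC z = hC z'"
    have r: "0 \<le> Fn (th z) \<and> Fn (th z) < 1" "0 \<le> Fn (th z') \<and> Fn (th z') < 1"
      using Fn_range th_range by auto
    then have "Fn (th z) = Fn (th z')" using zz(3) gc_inj unfolding hC_def by auto
    then have "th z = th z'" using Fn_inj th_range[of z] th_range[of z'] unfolding inj_on_def by auto
    then show "z = z'" using gc_th zz by metis
  qed
qed

lemma cdist_F:
  assumes ab: "0 \<le> a" "a \<le> b" "b \<le> 1"
  shows "circ_dist (gc (Fn a)) (gc (Fn b)) =
         2 * pi * min (mu (gc`{a..b}) / mu circle) (mu (gc`{b..1} \<union> gc`{0..a}) / mu circle)"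
proof -
  have r: "Fn a \<in> {0..1}" "Fn b \<in> {0..1}" using Fn_range' ab by auto
  have m: "Fn a \<le> Fn b" using Fn_mono ab by auto
  have e1: "\<bar>Fn a - Fn b\<bar> = mu (gc`{a..b}) / mu circle" using Fn_diff[OF ab] m by simp
  have "1 - \<bar>Fn a - Fn b\<bar> = (Fn 1 - Fn b) + Fn a" using m Fn1 by simp
  also have "\<dots> = mu (gc`{b..1}) / mu circle + mu (gc`{0..a}) / mu circle"
    using Fn_diff[of b 1] ab Fn_alt[of a] by simp
  also have "\<dots> = mu (gc`{b..1} \<union> gc`{0..a}) / mu circle"
    using mu_compl[OF ab] by (simp add: add_divide_distrib)
  finally show ?thesis using circ_dist_gc[OF r] e1 by simp
qed

lemma bound:
  assumes uv: "0 \<le> u" "u \<le> v" "v < 1" and K: "closed K" "connected K" "K \<subseteq> circle"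
    and inK: "gc u \<in> K" "gc v \<in> K"
  shows "circ_dist (gc (Fn u)) (gc (Fn v)) \<le> 2 * pi * (mu K / mu circle)"
proof -
  have W: "mu circle > 0" using muM_pos .
  have cd: "circ_dist (gc (Fn u)) (gc (Fn v)) =
         2 * pi * min (mu (gc`{u..v}) / mu circle) (mu (gc`{v..1} \<union> gc`{0..u}) / mu circle)"
    using cdist_F uv by auto
  from circ_conn[OF K(2,3) uv inK]
  show ?thesis
  proof
    assume "gc`{u..v} \<subseteq> K"
    then have "mu (gc`{u..v}) \<le> mu K" using mu_mono K(1) arc_closed uv by auto
    then show ?thesis unfolding cd using W pi_gt_zero
      by (smt (verit, best) divide_right_mono mult_left_mono)
  next
    assume "gc`{v..1} \<union> gc`{0..u} \<subseteq> K"
    moreover have "closed (gc`{v..1} \<union> gc`{0..u})" using arc_closed uv by (intro closed_Un) auto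
    ultimately have "mu (gc`{v..1} \<union> gc`{0..u}) \<le> mu K" using mu_mono K(1) by blast
    then show ?thesis unfolding cd using W pi_gt_zero
      by (smt (verit, best) divide_right_mono mult_left_mono)
  qed
qed


lemma hC_lip:
  assumes hh: "homeomorphism circle circle hC h'"
    and T: "homeomorphism circle circle T T'" and \<sigma>: "bij_betw \<sigma> I I"
    and Tc: "\<And>i x. i\<in>I \<Longrightarrow> x\<in>circle \<Longrightarrow> T (\<rho> (\<sigma> i) x) = \<rho> i x"
    and wc: "\<And>i. i\<in>I \<Longrightarrow> w i \<le> exp e * w (\<sigma> i)"
  shows "lipschitz_wrt circ_dist circle (exp e) (hC \<circ> T \<circ> h')"
proof -
  have W: "mu circle > 0" using muM_pos .
  have contT: "continuous_on circle T" using T homeomorphism_cont1 by blast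
  have TM: "T ` circle = circle" using T homeomorphism_image1 by blast
  have key: "circ_dist (hC (T (h' x))) (hC (T (h' y))) \<le> exp e * circ_dist x y"
    if x: "x \<in> circle" and y: "y \<in> circle" and le: "th (h' x) \<le> th (h' y)" for x y
  proof -
    define a where "a = th (h' x)"
    define b where "b = th (h' y)"
    have px: "h' x \<in> circle" "h' y \<in> circle" using hh x y homeomorphism_image2 by blast+
    have ab: "0 \<le> a" "a \<le> b" "b < 1" using le th_range by (auto simp: a_def b_def)
    have pxa: "h' x = gc a" "h' y = gc b" using px gc_th by (auto simp: a_def b_def)
    have "x = hC (h' x)" "y = hC (h' y)" using hh x y by (auto simp: homeomorphism_apply2)
    then have xy: "x = gc (Fn a)" "y = gc (Fn b)" using hC_gc ab by (auto simp: pxa)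
    define A1 where "A1 = gc`{a..b}"
    define A2 where "A2 = gc`{b..1} \<union> gc`{0..a}"
    have dxy: "circ_dist x y = 2 * pi * min (mu A1 / mu circle) (mu A2 / mu circle)"
      unfolding xy A1_def A2_def by (rule cdist_F) (use ab in auto)
    have A1c: "compact A1" "connected A1" "A1 \<subseteq> circle" "gc a \<in> A1" "gc b \<in> A1"
      using ab unfolding A1_def
      by (auto intro!: compact_continuous_image connected_continuous_image continuous_intros)
    have A2c: "compact A2" "connected A2" "A2 \<subseteq> circle" "gc a \<in> A2" "gc b \<in> A2"
    proof -
      have c1: "compact (gc`{b..1})" "compact (gc`{0..a})"
        by (auto intro!: compact_continuous_image continuous_intros)
      have c2: "connected (gc`{b..1})" "connected (gc`{0..a})"
        by (auto intro!: connected_continuous_image continuous_intros)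
      have "gc 1 \<in> gc`{b..1}" "gc 0 \<in> gc`{0..a}" using ab by auto
      then have "gc`{b..1} \<inter> gc`{0..a} \<noteq> {}" using gc_0_1 by auto
      then show "connected A2" unfolding A2_def using c2 connected_Un by blast
      show "compact A2" unfolding A2_def using c1 by blast
      show "A2 \<subseteq> circle" unfolding A2_def by auto
      show "gc a \<in> A2" "gc b \<in> A2" unfolding A2_def using ab by auto
    qed
    have gen: "circ_dist (hC (T (h' x))) (hC (T (h' y))) \<le> exp e * (2 * pi * (mu A / mu circle))"
      if A: "compact A" "connected A" "A \<subseteq> circle" "gc a \<in> A" "gc b \<in> A" for A
    proof -
      let ?K = "T ` A"
      have Kc: "compact ?K" by (rule compact_continuous_image[OF continuous_on_subset[OF contT A(3)] A(1)])
      have Kconn: "connected ?K" by (rule connected_continuous_image[OF continuous_on_subset[OF contT A(3)] A(2)])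
      have Ksub: "?K \<subseteq> circle" using A(3) TM by blast
      have Tin: "T (h' x) \<in> ?K" "T (h' y) \<in> ?K" using A by (auto simp: pxa)
      then have Tc1: "T (h' x) \<in> circle" "T (h' y) \<in> circle" using Ksub by blast+
      define a' where "a' = th (T (h' x))"
      define b' where "b' = th (T (h' y))"
      have Tre: "T (h' x) = gc a'" "T (h' y) = gc b'" using Tc1 gc_th by (auto simp: a'_def b'_def)
      have a'b': "0 \<le> a'" "a' < 1" "0 \<le> b'" "b' < 1" using th_range by (auto simp: a'_def b'_def)
      have hh': "hC (T (h' x)) = gc (Fn a')" "hC (T (h' y)) = gc (Fn b')"
        using hC_gc a'b' by (auto simp: Tre)
      have bnd: "circ_dist (hC (T (h' x))) (hC (T (h' y))) \<le> 2 * pi * (mu ?K / mu circle)"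
      proof (cases "a' \<le> b'")
        case True
        then show ?thesis unfolding hh'
          by (intro bound) (use a'b' Kc Kconn Ksub Tin Tre in \<open>auto intro: compact_imp_closed\<close>)
      next
        case False
        have "circ_dist (gc (Fn b')) (gc (Fn a')) \<le> 2 * pi * (mu ?K / mu circle)"
          by (intro bound) (use False a'b' Kc Kconn Ksub Tin Tre in \<open>auto intro: compact_imp_closed\<close>)
        then show ?thesis unfolding hh' using circ_dist_sym by (metis gc_circle)
      qed
      have "mu ?K \<le> exp e * mu A"
        by (rule mu_T[OF T \<sigma> Tc wc]) (use A compact_imp_closed in auto)
      then have "2 * pi * (mu ?K / mu circle) \<le> 2 * pi * (exp e * mu A / mu circle)"
        using W pi_gt_zero by (intro mult_left_mono divide_right_mono) auto
      then show ?thesis using bnd by (simp add: mult_ac)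
    qed
    have g1: "circ_dist (hC (T (h' x))) (hC (T (h' y))) \<le> exp e * (2 * pi * (mu A1 / mu circle))"
      using gen A1c by blast
    have g2: "circ_dist (hC (T (h' x))) (hC (T (h' y))) \<le> exp e * (2 * pi * (mu A2 / mu circle))"
      using gen A2c by blast
    have "exp e * circ_dist x y = min (exp e * (2 * pi * (mu A1 / mu circle))) (exp e * (2 * pi * (mu A2 / mu circle)))"
      unfolding dxy using pi_gt_zero by (simp add: min_mult_distrib_left)
    then show ?thesis using g1 g2 by linarith
  qed
  show ?thesis unfolding lipschitz_wrt_def
  proof (intro ballI)
    fix x y assume x: "x \<in> circle" and y: "y \<in> circle"
    show "circ_dist ((hC \<circ> T \<circ> h') x) ((hC \<circ> T \<circ> h') y) \<le> exp e * circ_dist x y"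
    proof (cases "th (h' x) \<le> th (h' y)")
      case True then show ?thesis using key[OF x y] by simp
    next
      case False
      have "circ_dist (hC (T (h' y))) (hC (T (h' x))) \<le> exp e * circ_dist y x" using key[OF y x] False by simp
      moreover have "circ_dist (hC (T (h' y))) (hC (T (h' x))) = circ_dist (hC (T (h' x))) (hC (T (h' y)))"
        by (rule circ_dist_sym) (auto simp: hC_def)
      ultimately show ?thesis using circ_dist_sym[OF x y] by simp
    qed
  qed
qed

end


lemma core:
  fixes I :: "'i set" and \<rho> \<rho>' :: "'i \<Rightarrow> complex \<Rightarrow> complex"
  assumes M: "cc_one_manifold M d"
    and hom: "\<And>i. i\<in>I \<Longrightarrow> homeomorphism M M (\<rho> i) (\<rho>' i)"
    and wpos: "\<And>i. i\<in>I \<Longrightarrow> 0 \<le> w i" and wsum: "w summable_on I"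
    and i0: "i0 \<in> I" "w i0 > 0" "\<And>x. x\<in>M \<Longrightarrow> \<rho> i0 x = x"
  shows "\<exists>h h'. homeomorphism M M h h' \<and>
     (\<forall>T T' \<sigma> e. homeomorphism M M T T' \<and> bij_betw \<sigma> I I \<and> (\<forall>i\<in>I. \<forall>x\<in>M. T (\<rho> (\<sigma> i) x) = \<rho> i x)
        \<and> (\<forall>i\<in>I. w i \<le> exp e * w (\<sigma> i)) \<longrightarrow> lipschitz_wrt d M (exp e) (h \<circ> T \<circ> h'))"
  using M unfolding cc_one_manifold_def
proof (elim disjE conjE)
  assume Md: "M = unit_interval_c" "d = dist"
  interpret sysI I w \<rho> \<rho>' i0
    by unfold_locales (use hom wpos wsum i0 Md in auto)
  obtain h' where h': "homeomorphism unit_interval_c unit_interval_c hI h'" using hI_homeo by blast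
  show ?thesis unfolding Md
    by (intro exI[of _ hI] exI[of _ h'] conjI h' allI impI) (auto intro: hI_lip[OF h'])
next
  assume Md: "M = circle" "d = circ_dist"
  interpret sysC I w \<rho> \<rho>' i0
    by unfold_locales (use hom wpos wsum i0 Md in auto)
  obtain h' where h': "homeomorphism circle circle hC h'" using hC_homeo by blast
  show ?thesis unfolding Md
    by (intro exI[of _ hC] exI[of _ h'] conjI h' allI impI) (auto intro: hC_lip[OF h'])
qed


lemma hom_pow: "homeomorphism S S f g \<Longrightarrow> homeomorphism S S (f ^^ n) (g ^^ n)"
proof (induction n)
  case 0
  then show ?case using homeomorphism_ident by (simp add: id_def)
next
  case (Suc n)
  have h: "homeomorphism S S (f \<circ> f ^^ n) (g ^^ n \<circ> g)"
    by (rule homeomorphism_compose[OF Suc.IH[OF Suc.prems] Suc.prems])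
  have e1: "f ^^ Suc n = f \<circ> f ^^ n" by (rule funpow.simps(2))
  have e2: "g ^^ Suc n = g ^^ n \<circ> g" by (rule funpow_Suc_right)
  show ?case unfolding e1 e2 by (rule h)
qed

definition fpow :: "('a \<Rightarrow> 'a) \<Rightarrow> ('a \<Rightarrow> 'a) \<Rightarrow> int \<Rightarrow> 'a \<Rightarrow> 'a" where
  "fpow f f' n = (if 0 \<le> n then f ^^ nat n else f' ^^ nat (- n))"

lemma fpow_hom: "homeomorphism S S f f' \<Longrightarrow> homeomorphism S S (fpow f f' n) (fpow f' f n)"
  using hom_pow[of S f f'] hom_pow[of S f' f] homeomorphism_sym[of S S f f']
  by (auto simp: fpow_def)

lemma fpow_step:
  assumes "homeomorphism S S f f'" "x \<in> S"
  shows "f (fpow f f' (n - 1) x) = fpow f f' n x"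
proof (cases "1 \<le> n")
  case True
  then have "nat n = Suc (nat (n - 1))" by simp
  then show ?thesis using True by (simp add: fpow_def)
next
  case False
  then have e: "nat (1 - n) = Suc (nat (- n))" by simp
  have "(f' ^^ nat (- n)) x \<in> S"
    using hom_pow[OF homeomorphism_symD[OF assms(1)], of "nat (-n)"] assms(2) homeomorphism_image1 by blast
  then have "f (f' ((f' ^^ nat (- n)) x)) = (f' ^^ nat (- n)) x" using assms(1) homeomorphism_apply2 by metis
  moreover have "fpow f f' n x = (f' ^^ nat (- n)) x" using False by (cases "n = 0") (auto simp: fpow_def)
  ultimately show ?thesis using False by (simp add: fpow_def e)
qed

lemma exp_int_summable: "e > 0 \<Longrightarrow> (\<lambda>n::int. exp (- e * \<bar>real_of_int n\<bar>)) summable_on UNIV"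
proof -
  assume e: "e > 0"
  let ?g = "\<lambda>n::int. exp (- e * \<bar>real_of_int n\<bar>)"
  have geo: "summable (\<lambda>k::nat. exp (- e * real k))"
  proof -
    have "summable (\<lambda>k::nat. exp (- e) ^ k)" using e by (intro summable_geometric) auto
    then show ?thesis by (simp add: exp_of_nat_mult[symmetric] mult.commute)
  qed
  have s1: "?g summable_on (int ` UNIV)"
  proof -
    have "(?g \<circ> int) summable_on UNIV"
      using geo by (subst summable_on_UNIV_nonneg_real_iff) (auto simp: o_def)
    then show ?thesis by (subst summable_on_reindex) auto
  qed
  have s2: "?g summable_on ((\<lambda>k. - int k) ` UNIV)"
  proof -
    have "(?g \<circ> (\<lambda>k. - int k)) summable_on UNIV"
      using geo by (subst summable_on_UNIV_nonneg_real_iff) (auto simp: o_def)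
    then show ?thesis by (subst summable_on_reindex) (auto simp: inj_on_def)
  qed
  have "UNIV = int ` UNIV \<union> (\<lambda>k. - int k) ` UNIV"
  proof -
    { fix n :: int have "n \<in> int ` UNIV \<union> (\<lambda>k. - int k) ` UNIV"
        by (cases "0 \<le> n") (auto intro: image_eqI[of n int "nat n"] image_eqI[of n "\<lambda>k. - int k" "nat (- n)"]) }
    then show ?thesis by auto
  qed
  then show ?thesis using summable_on_union[OF s1 s2] by metis
qed

lemma circle_conj:
  assumes f: "homeomorphism circle circle f f'" and e: "e > 0"
  shows "\<exists>h h'. homeomorphism circle circle h h' \<and> lipschitz_wrt circ_dist circle (exp e) (h \<circ> f \<circ> h')"
proof -
  let ?w = "\<lambda>n::int. exp (- e * \<bar>real_of_int n\<bar>)"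
  have "\<exists>h h'. homeomorphism circle circle h h' \<and>
     (\<forall>T T' \<sigma> e'. homeomorphism circle circle T T' \<and> bij_betw \<sigma> UNIV UNIV \<and>
        (\<forall>i\<in>UNIV. \<forall>x\<in>circle. T (fpow f f' (\<sigma> i) x) = fpow f f' i x)
        \<and> (\<forall>i\<in>UNIV. ?w i \<le> exp e' * ?w (\<sigma> i)) \<longrightarrow> lipschitz_wrt circ_dist circle (exp e') (h \<circ> T \<circ> h'))"
  proof (rule core)
    show "cc_one_manifold circle circ_dist" by (simp add: cc_one_manifold_def)
    show "homeomorphism circle circle (fpow f f' i) (fpow f' f i)" for i by (rule fpow_hom[OF f])
    show "0 \<le> ?w i" for i by simp
    show "?w summable_on UNIV" by (rule exp_int_summable[OF e])
    show "(0::int) \<in> UNIV" "?w 0 > 0" by auto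
    show "fpow f f' 0 x = x" for x by (simp add: fpow_def)
  qed
  then obtain h h' where hh: "homeomorphism circle circle h h'" and
    L0: "\<forall>T T' \<sigma> e'. homeomorphism circle circle T T' \<and> bij_betw \<sigma> UNIV UNIV \<and>
        (\<forall>i\<in>UNIV. \<forall>x\<in>circle. T (fpow f f' (\<sigma> i) x) = fpow f f' i x)
        \<and> (\<forall>i\<in>UNIV. ?w i \<le> exp e' * ?w (\<sigma> i)) \<longrightarrow> lipschitz_wrt circ_dist circle (exp e') (h \<circ> T \<circ> h')"
    by blast
  have L: "lipschitz_wrt circ_dist circle (exp e') (h \<circ> T \<circ> h')"
    if "homeomorphism circle circle T T'" "bij_betw \<sigma> UNIV UNIV"
         "\<forall>i\<in>UNIV. \<forall>x\<in>circle. T (fpow f f' (\<sigma> i) x) = fpow f f' i x"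
         "\<forall>i\<in>UNIV. ?w i \<le> exp e' * ?w (\<sigma> i)" for T T' \<sigma> e'
    using L0 that by blast
  have "lipschitz_wrt circ_dist circle (exp e) (h \<circ> f \<circ> h')"
  proof (rule L[OF f, of "\<lambda>n. n - 1"])
    show "bij_betw (\<lambda>n::int. n - 1) UNIV UNIV"
      by (rule bij_betwI[of _ _ _ "\<lambda>n. n + 1"]) auto
    show "\<forall>i\<in>UNIV. \<forall>x\<in>circle. f (fpow f f' (i - 1) x) = fpow f f' i x"
      using fpow_step[OF f] by auto
    show "\<forall>i\<in>UNIV. ?w i \<le> exp e * ?w (i - 1)"
    proof
      fix i :: int
      have "\<bar>real_of_int (i - 1)\<bar> \<le> \<bar>real_of_int i\<bar> + 1" by linarith
      then have "e * \<bar>real_of_int (i - 1)\<bar> \<le> e * (\<bar>real_of_int i\<bar> + 1)" using e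
        by (intro mult_left_mono) auto
      then have "- e * \<bar>real_of_int i\<bar> \<le> e + - e * \<bar>real_of_int (i - 1)\<bar>"
        by (simp add: algebra_simps)
      then show "?w i \<le> exp e * ?w (i - 1)" by (simp add: exp_add[symmetric])
    qed
  qed
  then show ?thesis using hh by blast
qed


context group
begin

lemma wv_closed: "set ws \<subseteq> carrier G \<Longrightarrow> foldr (\<otimes>) ws \<one> \<in> carrier G"
  by (induction ws) auto

lemma wv_append: "set xs \<subseteq> carrier G \<Longrightarrow> set ys \<subseteq> carrier G \<Longrightarrow>
    foldr (\<otimes>) (xs @ ys) \<one> = foldr (\<otimes>) xs \<one> \<otimes> foldr (\<otimes>) ys \<one>"
  by (induction xs) (auto simp: m_assoc wv_closed)

lemma gen_word:
  assumes "S \<subseteq> carrier G" "\<forall>s\<in>S. inv s \<in> S" "g \<in> generate G S"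
  shows "\<exists>ws. set ws \<subseteq> S \<and> foldr (\<otimes>) ws \<one> = g"
  using assms(3)
proof (induction rule: generate.induct)
  case one
  then show ?case by (intro exI[of _ "[]"]) auto
next
  case (incl h)
  then show ?case using assms(1) by (intro exI[of _ "[h]"]) auto
next
  case (inv h)
  then show ?case using assms(1,2) by (intro exI[of _ "[inv h]"]) auto
next
  case (eng h1 h2)
  then obtain ws1 ws2 where "set ws1 \<subseteq> S" "foldr (\<otimes>) ws1 \<one> = h1" "set ws2 \<subseteq> S" "foldr (\<otimes>) ws2 \<one> = h2"
    by blast
  moreover have "foldr (\<otimes>) (ws1 @ ws2) \<one> = foldr (\<otimes>) ws1 \<one> \<otimes> foldr (\<otimes>) ws2 \<one>"
    by (rule wv_append) (use calculation assms(1) in auto)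
  ultimately show ?case by (intro exI[of _ "ws1 @ ws2"]) auto
qed

lemma wl_word:
  assumes "\<exists>ws. set ws \<subseteq> S \<and> foldr (\<otimes>) ws \<one> = g"
  shows "\<exists>ws. set ws \<subseteq> S \<and> length ws = word_length G S g \<and> foldr (\<otimes>) ws \<one> = g"
  unfolding word_length_def by (rule LeastI_ex) (use assms in blast)

lemma wl_le: "set ws \<subseteq> S \<Longrightarrow> foldr (\<otimes>) ws \<one> = g \<Longrightarrow> word_length G S g \<le> length ws"
  unfolding word_length_def by (rule Least_le) blast

end

locale fgroup = group G for G :: "('g, 'b) monoid_scheme" (structure) +
  fixes S
  assumes Sfin: "finite S" and Ssub: "S \<subseteq> carrier G" and Ssym: "\<forall>s\<in>S. inv s \<in> S"
    and Sgen: "generate G S = carrier G"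
begin

lemma has_word: "g \<in> carrier G \<Longrightarrow> \<exists>ws. set ws \<subseteq> S \<and> length ws = word_length G S g \<and> foldr (\<otimes>) ws \<one> = g"
  using gen_word[OF Ssub Ssym] Sgen wl_word by blast

lemma wl_step: "s \<in> S \<Longrightarrow> g \<in> carrier G \<Longrightarrow> word_length G S (inv s \<otimes> g) \<le> word_length G S g + 1"
proof -
  assume s: "s \<in> S" and g: "g \<in> carrier G"
  obtain ws where ws: "set ws \<subseteq> S" "length ws = word_length G S g" "foldr (\<otimes>) ws \<one> = g"
    using has_word[OF g] by blast
  have "set (inv s # ws) \<subseteq> S" using ws Ssym s by auto
  moreover have "foldr (\<otimes>) (inv s # ws) \<one> = inv s \<otimes> g" using ws by simp
  ultimately have "word_length G S (inv s \<otimes> g) \<le> length (inv s # ws)" by (rule wl_le)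
  then show ?thesis using ws by simp
qed

lemma ball_finite: "finite (word_ball G S n)"
proof -
  have "word_ball G S n \<subseteq> (\<lambda>ws. foldr (\<otimes>) ws \<one>) ` {ws. set ws \<subseteq> S \<and> length ws \<le> n}"
  proof
    fix g assume "g \<in> word_ball G S n"
    then have g: "g \<in> carrier G" "word_length G S g \<le> n" by (auto simp: word_ball_def)
    then obtain ws where "set ws \<subseteq> S" "length ws = word_length G S g" "foldr (\<otimes>) ws \<one> = g"
      using has_word by blast
    then show "g \<in> (\<lambda>ws. foldr (\<otimes>) ws \<one>) ` {ws. set ws \<subseteq> S \<and> length ws \<le> n}" using g by force
  qed
  then show ?thesis using finite_lists_length_le[OF Sfin] by (meson finite_imageI finite_subset)
qed

lemma one_ball: "\<one> \<in> word_ball G S n"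
proof -
  have "word_length G S \<one> \<le> length ([] :: 'g list)" by (rule wl_le) auto
  then show ?thesis by (simp add: word_ball_def)
qed

lemma card_ball_pos: "card (word_ball G S n) \<ge> 1"
  using one_ball ball_finite by (metis Suc_leI card_gt_0_iff empty_iff One_nat_def)

lemma wsum_summable:
  assumes growth: "(\<lambda>n. ln (real (card (word_ball G S n))) / real n) \<longlonglongrightarrow> 0" and e: "e > 0"
  shows "(\<lambda>g. exp (- e * real (word_length G S g))) summable_on carrier G"
proof -
  define c where "c n = real (card (word_ball G S n))" for n
  have cpos: "c n \<ge> 1" for n using card_ball_pos[of n] by (simp add: c_def)
  obtain N0 where N0: "\<And>n. n \<ge> N0 \<Longrightarrow> \<bar>ln (c n) / real n\<bar> < e/2"
    using growth e unfolding c_def LIMSEQ_def dist_real_def by (metis abs_minus_commute diff_zero half_gt_zero)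
  have bnd: "c n * exp (- e * real n) \<le> exp (- (e/2) * real n)" if n: "n \<ge> Suc N0" for n
  proof -
    have np: "real n > 0" using n by simp
    have "ln (c n) / real n < e/2" using N0[of n] n abs_ge_self[of "ln (c n) / real n"] by linarith
    then have "ln (c n) < e/2 * real n" using np by (simp add: divide_less_eq)
    then have "c n < exp (e/2 * real n)" using cpos[of n] by (metis exp_less_mono exp_ln less_le_trans zero_less_one)
    then have "c n * exp (- e * real n) \<le> exp (e/2 * real n) * exp (- e * real n)"
      by (intro mult_right_mono) auto
    also have "\<dots> = exp (- (e/2) * real n)" by (simp add: exp_add[symmetric] algebra_simps)
    finally show ?thesis .
  qed
  have geo: "summable (\<lambda>n::nat. exp (- (e/2) * real n))"
  proof -
    have "summable (\<lambda>k::nat. exp (- (e/2)) ^ k)" using e by (intro summable_geometric) auto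
    then show ?thesis by (simp add: exp_of_nat_mult[symmetric] mult.commute)
  qed
  have cs: "summable (\<lambda>n. c n * exp (- e * real n))"
  proof (rule summable_comparison_test'[OF geo, of "Suc N0"])
    fix n assume n: "Suc N0 \<le> n"
    have "0 \<le> c n * exp (- e * real n)" using cpos[of n] by (intro mult_nonneg_nonneg) auto
    then show "norm (c n * exp (- e * real n)) \<le> exp (- (e/2) * real n)" using bnd[OF n] by simp
  qed
  define Cst where "Cst = suminf (\<lambda>n. c n * exp (- e * real n))"
  have partial: "(\<Sum>g\<in>word_ball G S N. exp (- e * real (word_length G S g))) \<le> Cst" for N
  proof -
    let ?B = "word_ball G S N"
    let ?l = "word_length G S"
    have "(\<Sum>g\<in>?B. exp (- e * real (?l g))) = (\<Sum>g\<in>?B. \<Sum>n\<in>{..N}. if ?l g = n then exp (- e * real n) else 0)"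
      by (intro sum.cong refl) (auto simp: word_ball_def sum.delta)
    also have "\<dots> = (\<Sum>n\<in>{..N}. \<Sum>g\<in>?B. if ?l g = n then exp (- e * real n) else 0)"
      by (rule sum.swap)
    also have "\<dots> = (\<Sum>n\<in>{..N}. real (card {g\<in>?B. ?l g = n}) * exp (- e * real n))"
      by (intro sum.cong refl) (simp add: sum.If_cases ball_finite Int_def conj_commute)
    also have "\<dots> \<le> (\<Sum>n\<in>{..N}. c n * exp (- e * real n))"
    proof (rule sum_mono)
      fix n assume "n \<in> {..N}"
      have "{g\<in>?B. ?l g = n} \<subseteq> word_ball G S n" by (auto simp: word_ball_def)
      then have "card {g\<in>?B. ?l g = n} \<le> card (word_ball G S n)" by (rule card_mono[OF ball_finite])
      then show "real (card {g\<in>?B. ?l g = n}) * exp (- e * real n) \<le> c n * exp (- e * real n)"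
        by (simp add: c_def)
    qed
    also have "\<dots> \<le> Cst" unfolding Cst_def
    proof (rule sum_le_suminf[OF cs])
      fix n show "0 \<le> c n * exp (- e * real n)" using cpos[of n] by (intro mult_nonneg_nonneg) auto
    qed auto
    finally show ?thesis .
  qed
  show ?thesis
  proof (rule nonneg_bdd_above_summable_on)
    show "bdd_above (sum (\<lambda>g. exp (- e * real (word_length G S g))) ` {F. F \<subseteq> carrier G \<and> finite F})"
    proof (rule bdd_aboveI)
      fix x assume "x \<in> sum (\<lambda>g. exp (- e * real (word_length G S g))) ` {F. F \<subseteq> carrier G \<and> finite F}"
      then obtain F where F: "F \<subseteq> carrier G" "finite F" "x = (\<Sum>g\<in>F. exp (- e * real (word_length G S g)))" by auto
      define N where "N = Max (insert 0 (word_length G S ` F))"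
      have "F \<subseteq> word_ball G S N" using F unfolding word_ball_def N_def by auto
      then have "x \<le> (\<Sum>g\<in>word_ball G S N. exp (- e * real (word_length G S g)))"
        unfolding F(3) by (rule sum_mono2[OF ball_finite]) auto
      then show "x \<le> Cst" using partial[of N] by linarith
    qed
  qed auto
qed

end


lemma part1:
  fixes G :: "('g, 'b) monoid_scheme" and \<rho> :: "'g \<Rightarrow> complex \<Rightarrow> complex"
  assumes grp: "group G" and fin: "finite S" and sub: "S \<subseteq> carrier G" and sym: "\<forall>s\<in>S. inv\<^bsub>G\<^esub> s \<in> S"
    and gen: "generate G S = carrier G" and M: "cc_one_manifold M d"
    and homs: "\<forall>g\<in>carrier G. \<exists>g'. homeomorphism M M (\<rho> g) g'"
    and act: "\<forall>g\<in>carrier G. \<forall>h\<in>carrier G. \<forall>x\<in>M. \<rho> (g \<otimes>\<^bsub>G\<^esub> h) x = \<rho> g (\<rho> h x)"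
    and one: "\<forall>x\<in>M. \<rho> \<one>\<^bsub>G\<^esub> x = x"
    and growth: "(\<lambda>n. ln (real (card (word_ball G S n))) / real n) \<longlonglongrightarrow> 0"
    and e: "e > 0"
  shows "\<exists>h h'. homeomorphism M M h h' \<and> (\<forall>s\<in>S. lipschitz_wrt d M (exp e) (h \<circ> \<rho> s \<circ> h'))"
proof -
  interpret fgroup G S by (intro fgroup.intro grp fgroup_axioms.intro) (use fin sub sym gen in auto)
  define \<rho>' where "\<rho>' g = (SOME g'. homeomorphism M M (\<rho> g) g')" for g
  have hom: "homeomorphism M M (\<rho> g) (\<rho>' g)" if "g \<in> carrier G" for g
    unfolding \<rho>'_def using homs that by (metis (mono_tags, lifting) someI_ex)
  let ?w = "\<lambda>g. exp (- e * real (word_length G S g))"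
  have "\<exists>h h'. homeomorphism M M h h' \<and>
     (\<forall>T T' \<sigma> e'. homeomorphism M M T T' \<and> bij_betw \<sigma> (carrier G) (carrier G) \<and>
        (\<forall>i\<in>carrier G. \<forall>x\<in>M. T (\<rho> (\<sigma> i) x) = \<rho> i x)
        \<and> (\<forall>i\<in>carrier G. ?w i \<le> exp e' * ?w (\<sigma> i)) \<longrightarrow> lipschitz_wrt d M (exp e') (h \<circ> T \<circ> h'))"
  proof (rule core[OF M])
    show "homeomorphism M M (\<rho> i) (\<rho>' i)" if "i \<in> carrier G" for i using hom that .
    show "0 \<le> ?w i" for i by simp
    show "?w summable_on carrier G" by (rule wsum_summable[OF growth e])
    show "\<one>\<^bsub>G\<^esub> \<in> carrier G" "?w \<one>\<^bsub>G\<^esub> > 0" by auto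
    show "\<rho> \<one>\<^bsub>G\<^esub> x = x" if "x \<in> M" for x using one that by auto
  qed
  then obtain h h' where hh: "homeomorphism M M h h'" and
    L0: "\<forall>T T' \<sigma> e'. homeomorphism M M T T' \<and> bij_betw \<sigma> (carrier G) (carrier G) \<and>
        (\<forall>i\<in>carrier G. \<forall>x\<in>M. T (\<rho> (\<sigma> i) x) = \<rho> i x)
        \<and> (\<forall>i\<in>carrier G. ?w i \<le> exp e' * ?w (\<sigma> i)) \<longrightarrow> lipschitz_wrt d M (exp e') (h \<circ> T \<circ> h')"
    by blast
  have "lipschitz_wrt d M (exp e) (h \<circ> \<rho> s \<circ> h')" if s: "s \<in> S" for s
  proof -
    have sc: "s \<in> carrier G" "inv\<^bsub>G\<^esub> s \<in> carrier G" using s sub by auto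
    have "homeomorphism M M (\<rho> s) (\<rho>' s)" using hom sc by blast
    moreover have "bij_betw (\<lambda>g. inv\<^bsub>G\<^esub> s \<otimes>\<^bsub>G\<^esub> g) (carrier G) (carrier G)"
      by (rule bij_betwI[of _ _ _ "\<lambda>g. s \<otimes>\<^bsub>G\<^esub> g"]) (use sc in \<open>auto simp: m_assoc[symmetric]\<close>)
    moreover have "\<forall>i\<in>carrier G. \<forall>x\<in>M. \<rho> s (\<rho> (inv\<^bsub>G\<^esub> s \<otimes>\<^bsub>G\<^esub> i) x) = \<rho> i x"
    proof (intro ballI)
      fix i x assume i: "i \<in> carrier G" and x: "x \<in> M"
      have "\<rho> s (\<rho> (inv\<^bsub>G\<^esub> s \<otimes>\<^bsub>G\<^esub> i) x) = \<rho> (s \<otimes>\<^bsub>G\<^esub> (inv\<^bsub>G\<^esub> s \<otimes>\<^bsub>G\<^esub> i)) x" using act sc i x by auto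
      also have "s \<otimes>\<^bsub>G\<^esub> (inv\<^bsub>G\<^esub> s \<otimes>\<^bsub>G\<^esub> i) = i" using sc i by (simp add: m_assoc[symmetric])
      finally show "\<rho> s (\<rho> (inv\<^bsub>G\<^esub> s \<otimes>\<^bsub>G\<^esub> i) x) = \<rho> i x" .
    qed
    moreover have "\<forall>i\<in>carrier G. ?w i \<le> exp e * ?w (inv\<^bsub>G\<^esub> s \<otimes>\<^bsub>G\<^esub> i)"
    proof
      fix i assume i: "i \<in> carrier G"
      have "real (word_length G S (inv\<^bsub>G\<^esub> s \<otimes>\<^bsub>G\<^esub> i)) \<le> real (word_length G S i) + 1"
        using wl_step[OF s i] by linarith
      then have "e * real (word_length G S (inv\<^bsub>G\<^esub> s \<otimes>\<^bsub>G\<^esub> i)) \<le> e * (real (word_length G S i) + 1)"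
        using e by (intro mult_left_mono) auto
      then have "- e * real (word_length G S i) \<le> e + - e * real (word_length G S (inv\<^bsub>G\<^esub> s \<otimes>\<^bsub>G\<^esub> i))"
        by (simp add: algebra_simps)
      then show "?w i \<le> exp e * ?w (inv\<^bsub>G\<^esub> s \<otimes>\<^bsub>G\<^esub> i)" by (simp add: exp_add[symmetric])
    qed
    ultimately show ?thesis using L0 by blast
  qed
  then show ?thesis using hh by blast
qed


lemma pack_real:
  fixes T :: "real set"
  assumes "finite T" "T \<subseteq> {a..b}" "\<forall>x\<in>T. \<forall>y\<in>T. x \<noteq> y \<longrightarrow> r \<le> \<bar>x - y\<bar>" "r > 0" "a \<le> b"
  shows "real (card T) \<le> (b - a) / r + 1"
  using assms
proof (induction "card T" arbitrary: T b)
  case 0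
  then show ?case by (simp add: divide_nonneg_pos)
next
  case (Suc n)
  then have ne: "T \<noteq> {}" by auto
  define m where "m = Max T"
  have mT: "m \<in> T" using Suc ne by (simp add: m_def)
  define T' where "T' = T - {m}"
  have cT': "n = card T'" using Suc mT by (simp add: T'_def)
  have m_b: "m \<le> b" using mT Suc by auto
  show ?case
  proof (cases "T' = {}")
    case True
    then have "card T = 1" using cT' Suc by simp
    then show ?thesis using Suc by (simp add: divide_nonneg_pos)
  next
    case False
    have sub: "T' \<subseteq> {a..m - r}"
    proof
      fix x assume x: "x \<in> T'"
      then have "x \<in> T" "x \<noteq> m" by (auto simp: T'_def)
      moreover have "x \<le> m" using \<open>x \<in> T\<close> Suc(3) by (simp add: m_def)
      ultimately have "r \<le> m - x" using Suc(5) mT by force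
      then show "x \<in> {a..m - r}" using \<open>x \<in> T\<close> Suc(4) by auto
    qed
    then have "a \<le> m - r" using False by fastforce
    have "real (card T') \<le> (m - r - a) / r + 1"
      by (rule Suc.hyps(1)[OF cT']) (use Suc sub \<open>a \<le> m - r\<close> in \<open>auto simp: T'_def\<close>)
    moreover have "(m - r - a) / r + 1 = (m - a) / r" using Suc(6) by (simp add: field_simps)
    moreover have "card T = Suc (card T')" using cT' Suc by simp
    moreover have "(m - a) / r \<le> (b - a) / r" using m_b Suc(6) by (simp add: divide_right_mono)
    ultimately show ?thesis by simp
  qed
qed


lemma pack_circle:
  assumes "finite P" "P \<subseteq> circle" "\<forall>z\<in>P. \<forall>w\<in>P. z \<noteq> w \<longrightarrow> r \<le> circ_dist z w" "r > 0"
  shows "real (card P) \<le> 2 * pi / r + 1"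
proof -
  have inj: "inj_on th P"
    by (rule inj_onI) (metis assms(2) gc_th subsetD)
  have sep: "\<forall>x\<in>th`P. \<forall>y\<in>th`P. x \<noteq> y \<longrightarrow> r / (2 * pi) \<le> \<bar>x - y\<bar>"
  proof (intro ballI impI)
    fix x y assume xy: "x \<in> th`P" "y \<in> th`P" "x \<noteq> y"
    then obtain z w where zw: "z \<in> P" "w \<in> P" "x = th z" "y = th w" by auto
    then have "z \<noteq> w" using xy by auto
    then have "r \<le> circ_dist z w" using assms zw by auto
    also have "z \<in> circle" "w \<in> circle" using zw assms(2) by auto
    then have "circ_dist z w = circ_dist (gc x) (gc y)" using zw gc_th by auto
    also have "\<dots> = 2 * pi * min \<bar>x - y\<bar> (1 - \<bar>x - y\<bar>)"
      by (rule circ_dist_gc) (use zw th_range less_imp_le in auto)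
    also have "\<dots> \<le> 2 * pi * \<bar>x - y\<bar>" by (intro mult_left_mono) auto
    finally show "r / (2 * pi) \<le> \<bar>x - y\<bar>" by (simp add: divide_simps mult.commute)
  qed
  have "real (card (th`P)) \<le> (1 - 0) / (r / (2 * pi)) + 1"
    by (rule pack_real) (use assms sep th_range in \<open>auto simp: less_imp_le\<close>)
  then show ?thesis using card_image[OF inj] by simp
qed

lemma lip_iter:
  assumes "lipschitz_wrt d X L g" "g ` X \<subseteq> X" "x \<in> X" "y \<in> X" "L \<ge> 0"
  shows "d ((g ^^ k) x) ((g ^^ k) y) \<le> L ^ k * d x y"
proof (induction k)
  case 0 then show ?case by simp
next
  case (Suc k)
  have in_X: "(g ^^ k) x \<in> X" "(g ^^ k) y \<in> X"
    using assms(2-4) by (induction k) auto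
  have "d ((g ^^ Suc k) x) ((g ^^ Suc k) y) \<le> L * d ((g ^^ k) x) ((g ^^ k) y)"
    using assms(1) in_X unfolding lipschitz_wrt_def by simp
  also have "\<dots> \<le> L * (L ^ k * d x y)" using Suc assms(5) by (rule mult_left_mono)
  finally show ?case by (simp add: mult.assoc)
qed

lemma circ_dist_nonneg: "0 \<le> circ_dist z w" by (simp add: circ_dist_def)

lemma uc_circ:
  assumes "continuous_on circle k" "k ` circle \<subseteq> circle" "e > 0"
  shows "\<exists>\<delta>>0. \<forall>a\<in>circle. \<forall>b\<in>circle. circ_dist a b < \<delta> \<longrightarrow> circ_dist (k a) (k b) < e"
proof -
  obtain \<delta>1 where \<delta>1: "\<delta>1 > 0" "\<And>z w. z \<in> circle \<Longrightarrow> w \<in> circle \<Longrightarrow> dist z w < \<delta>1 \<Longrightarrow> circ_dist z w < e"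
    using circ_dist_cont[OF assms(3)] by blast
  have "uniformly_continuous_on circle k"
    using assms(1) pC.M_compact compact_uniformly_continuous by blast
  then obtain \<delta>0 where \<delta>0: "\<delta>0 > 0" "\<And>a b. a \<in> circle \<Longrightarrow> b \<in> circle \<Longrightarrow> dist b a < \<delta>0 \<Longrightarrow> dist (k b) (k a) < \<delta>1"
    using \<delta>1(1) unfolding uniformly_continuous_on_def by metis
  have "isCont cis 0" unfolding isCont_def using tendsto_cis[OF tendsto_ident_at[of 0 UNIV]] by simp
  then obtain \<delta> where \<delta>: "\<delta> > 0" "\<And>x. dist x 0 < \<delta> \<Longrightarrow> dist (cis x) (cis 0) < \<delta>0"
    using \<delta>0(1) unfolding continuous_at_eps_delta by blast
  show ?thesis
  proof (intro exI[of _ \<delta>] conjI ballI impI \<delta>(1))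
    fix a b assume ab: "a \<in> circle" "b \<in> circle" "circ_dist a b < \<delta>"
    have b0: "b \<noteq> 0" "norm b = 1" using ab by (auto simp: circle_iff)
    have u: "norm (a / b) = 1" using ab by (auto simp: circle_iff norm_divide)
    then have "a / b \<noteq> 0" by auto
    then have "cis (Arg (a / b)) = a / b" using cis_Arg[of "a/b"] u by (simp add: sgn_div_norm)
    moreover have "dist (Arg (a / b)) 0 < \<delta>" using ab by (simp add: circ_dist_def dist_real_def)
    ultimately have "dist (a / b) 1 < \<delta>0" using \<delta>(2) by fastforce
    moreover have "dist (a / b) 1 = dist a b"
    proof -
      have "a / b - 1 = (a - b) / b" using b0 by (simp add: field_simps)
      then show ?thesis using b0 by (simp add: dist_norm norm_divide)
    qed
    ultimately have "dist a b < \<delta>0" by simp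
    then have "dist (k a) (k b) < \<delta>1" using \<delta>0(2)[of b a] ab by (simp add: dist_commute)
    then show "circ_dist (k a) (k b) < e" using \<delta>1(2) assms(2) ab by auto
  qed
qed


lemma sep_bound:
  assumes f: "homeomorphism circle circle f f'" and eps: "\<epsilon> > 0" and e: "e > 0"
  shows "\<exists>C>0. \<forall>n. 1 \<le> max_separated circ_dist circle f n e \<and>
            real (max_separated circ_dist circle f n e) \<le> C * exp (\<epsilon> * real n)"
proof -
  obtain h h' where hh: "homeomorphism circle circle h h'"
    and lip: "lipschitz_wrt circ_dist circle (exp \<epsilon>) (h \<circ> f \<circ> h')"
    using circle_conj[OF f eps] by blast
  define g where "g = h \<circ> f \<circ> h'"
  define L where "L = exp \<epsilon>"
  have L1: "L \<ge> 1" using eps by (simp add: L_def)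
  have lipg: "lipschitz_wrt circ_dist circle L g" using lip by (simp add: g_def L_def)
  have hM: "h ` circle = circle" "h' ` circle = circle" "f ` circle = circle"
    using hh f homeomorphism_image1 homeomorphism_image2 by blast+
  have gM: "g ` circle \<subseteq> circle"
  proof
    fix z assume "z \<in> g ` circle"
    then obtain x where x: "x \<in> circle" "z = h (f (h' x))" by (auto simp: g_def)
    then have "h' x \<in> circle" using hM by blast
    then have "f (h' x) \<in> circle" using hM by blast
    then show "z \<in> circle" using hM x by blast
  qed
  have fk: "(f ^^ k) x = h' ((g ^^ k) (h x))" if x: "x \<in> circle" for x k
  proof (induction k)
    case 0 then show ?case using hh x by (simp add: homeomorphism_apply1)
  next
    case (Suc k)
    have "(g ^^ k) (h x) \<in> circle" using gM hM x by (induction k) auto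
    then have "h' ((g ^^ k) (h x)) \<in> circle" using hM by auto
    then have "f (h' ((g ^^ k) (h x))) \<in> circle" using hM by auto
    then have "h' (g ((g ^^ k) (h x))) = f (h' ((g ^^ k) (h x)))"
      using hh by (simp add: g_def homeomorphism_apply1)
    then show ?case using Suc by simp
  qed
  obtain \<delta> where \<delta>: "\<delta> > 0" "\<And>a b. a \<in> circle \<Longrightarrow> b \<in> circle \<Longrightarrow> circ_dist a b < \<delta> \<Longrightarrow> circ_dist (h' a) (h' b) < e"
    using uc_circ[of h' e] hh e homeomorphism_cont2 hM by (metis order_refl)
  define C where "C = 2 * pi / \<delta> + 1"
  have Cpos: "C > 0" using \<delta> by (simp add: C_def add_pos_pos)
  have card_bound: "real (card S) \<le> C * exp (\<epsilon> * real n)" if S: "separated_set circ_dist circle f n e S" for S n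
  proof -
    have SM: "S \<subseteq> circle" "finite S" using S by (auto simp: separated_set_def)
    have injh: "inj_on h S" using hh SM by (metis homeomorphism_apply1 inj_on_inverseI subsetD)
    have Ln: "L ^ n > 0" using L1 by simp
    have sepP: "\<forall>p\<in>h`S. \<forall>q\<in>h`S. p \<noteq> q \<longrightarrow> \<delta> / L ^ n \<le> circ_dist p q"
    proof (intro ballI impI)
      fix p q assume pq: "p \<in> h`S" "q \<in> h`S" "p \<noteq> q"
      then obtain x y where xy: "x \<in> S" "y \<in> S" "p = h x" "q = h y" by auto
      then have "x \<noteq> y" using pq by auto
      then obtain k where k: "k < n" "circ_dist ((f ^^ k) x) ((f ^^ k) y) > e"
        using S xy unfolding separated_set_def by blast
      have xM: "x \<in> circle" "y \<in> circle" using xy SM by auto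
      have gin: "(g ^^ k) (h x) \<in> circle" "(g ^^ k) (h y) \<in> circle"
        using gM hM xM by (induction k) auto
      have "\<delta> \<le> circ_dist ((g ^^ k) (h x)) ((g ^^ k) (h y))"
      proof (rule ccontr)
        assume "\<not> ?thesis"
        then have "circ_dist (h' ((g ^^ k) (h x))) (h' ((g ^^ k) (h y))) < e" using \<delta>(2) gin by auto
        then show False using k fk xM by auto
      qed
      also have "\<dots> \<le> L ^ k * circ_dist (h x) (h y)"
        by (rule lip_iter[OF lipg gM]) (use hM xM L1 in auto)
      also have "\<dots> \<le> L ^ n * circ_dist (h x) (h y)"
        using L1 k by (intro mult_right_mono power_increasing) (auto simp: circ_dist_nonneg)
      finally show "\<delta> / L ^ n \<le> circ_dist p q" using Ln xy by (simp add: divide_simps mult.commute)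
    qed
    have "real (card (h`S)) \<le> 2 * pi / (\<delta> / L ^ n) + 1"
      by (rule pack_circle) (use SM hM sepP \<delta> Ln in auto)
    then have "real (card S) \<le> 2 * pi / \<delta> * L ^ n + 1" using card_image[OF injh] by simp
    also have "\<dots> \<le> 2 * pi / \<delta> * L ^ n + L ^ n" using L1 by simp
    also have "\<dots> = C * L ^ n" by (simp add: C_def algebra_simps)
    also have "L ^ n = exp (\<epsilon> * real n)" by (simp add: L_def exp_of_nat_mult[symmetric] mult.commute)
    finally show ?thesis .
  qed
  have "1 \<le> max_separated circ_dist circle f n e \<and>
            real (max_separated circ_dist circle f n e) \<le> C * exp (\<epsilon> * real n)" for n
  proof -
    let ?P = "\<lambda>k. \<exists>S. separated_set circ_dist circle f n e S \<and> card S = k"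
    have P1: "?P 1" by (intro exI[of _ "{1}"]) (auto simp: separated_set_def circle_iff)
    have bd: "y \<le> nat \<lceil>C * exp (\<epsilon> * real n)\<rceil>" if Py: "?P y" for y
    proof -
      obtain S where "separated_set circ_dist circle f n e S" "card S = y" using Py by blast
      then have "real y \<le> C * exp (\<epsilon> * real n)" using card_bound by blast
      then show ?thesis by linarith
    qed
    have "?P (Greatest ?P)" by (rule GreatestI_nat[where P="?P", OF P1 bd])
    then obtain S0 where "separated_set circ_dist circle f n e S0" "card S0 = Greatest ?P" by blast
    then have "real (Greatest ?P) \<le> C * exp (\<epsilon> * real n)" using card_bound by metis
    moreover have "1 \<le> Greatest ?P" by (rule Greatest_le_nat[where P="?P", OF P1 bd])
    ultimately show ?thesis by (simp add: max_separated_def)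
  qed
  then show ?thesis using Cpos by blast
qed

lemma entropy_zero:
  assumes f: "homeomorphism circle circle f f'"
  shows "top_entropy circ_dist circle f = 0"
proof -
  have each: "limsup (\<lambda>n. ereal (ln (real (max_separated circ_dist circle f n e)) / real n)) = 0"
    if e: "e > 0" for e
  proof (rule antisym)
    show "limsup (\<lambda>n. ereal (ln (real (max_separated circ_dist circle f n e)) / real n)) \<le> 0"
    proof (rule ereal_le_epsilon2)
      fix \<epsilon> :: real assume eps: "0 < \<epsilon>"
      obtain C where C: "C > 0" "\<And>n. 1 \<le> max_separated circ_dist circle f n e \<and>
            real (max_separated circ_dist circle f n e) \<le> C * exp (\<epsilon> * real n)"
        using sep_bound[OF f eps e] by blast
      have ev: "eventually (\<lambda>n. ereal (ln (real (max_separated circ_dist circle f n e)) / real n)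
                 \<le> ereal (ln C / real n + \<epsilon>)) sequentially"
        unfolding eventually_sequentially
      proof (intro exI[of _ 1] allI impI)
        fix n :: nat assume n: "1 \<le> n"
        have m1: "1 \<le> real (max_separated circ_dist circle f n e)" using C(2)[of n] by simp
        have "ln (real (max_separated circ_dist circle f n e)) \<le> ln (C * exp (\<epsilon> * real n))"
          using C(2)[of n] m1 by (subst ln_le_cancel_iff) auto
        also have "\<dots> = ln C + \<epsilon> * real n" using C(1) by (simp add: ln_mult)
        finally have "ln (real (max_separated circ_dist circle f n e)) / real n \<le> (ln C + \<epsilon> * real n) / real n"
          using n by (intro divide_right_mono) auto
        also have "\<dots> = ln C / real n + \<epsilon>" using n by (simp add: field_simps)
        finally show "ereal (ln (real (max_separated circ_dist circle f n e)) / real n) \<le> ereal (ln C / real n + \<epsilon>)"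
          by simp
      qed
      have lim: "(\<lambda>n. ereal (ln C / real n + \<epsilon>)) \<longlonglongrightarrow> ereal (0 + \<epsilon>)"
        unfolding lim_ereal by (intro tendsto_intros)
      have "limsup (\<lambda>n. ereal (ln (real (max_separated circ_dist circle f n e)) / real n))
            \<le> limsup (\<lambda>n. ereal (ln C / real n + \<epsilon>))" by (rule Limsup_mono[OF ev])
      also have "\<dots> = ereal \<epsilon>" using lim_imp_Limsup[OF _ lim] by simp
      finally show "limsup (\<lambda>n. ereal (ln (real (max_separated circ_dist circle f n e)) / real n)) \<le> 0 + ereal \<epsilon>"
        by simp
    qed
    show "0 \<le> limsup (\<lambda>n. ereal (ln (real (max_separated circ_dist circle f n e)) / real n))"
    proof (rule le_Limsup)
      show "sequentially \<noteq> bot" by simp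
      obtain C where C: "C > 0" "\<And>n. 1 \<le> max_separated circ_dist circle f n e \<and>
            real (max_separated circ_dist circle f n e) \<le> C * exp (1 * real n)"
        using sep_bound[OF f _ e, of 1] by auto
      show "\<forall>\<^sub>F n in sequentially. 0 \<le> ereal (ln (real (max_separated circ_dist circle f n e)) / real n)"
      proof (rule always_eventually, rule allI)
        fix n
        have "1 \<le> real (max_separated circ_dist circle f n e)" using C(2)[of n] by simp
        then have "0 \<le> ln (real (max_separated circ_dist circle f n e)) / real n" by simp
        then show "0 \<le> ereal (ln (real (max_separated circ_dist circle f n e)) / real n)" by simp
      qed
    qed
  qed
  have "top_entropy circ_dist circle f = (SUP e\<in>{0::real<..}. (0::ereal))"
    unfolding top_entropy_def by (intro SUP_cong refl) (simp add: each)
  also have "\<dots> = 0" by simp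
  finally show ?thesis .
qed



theorem mainTheorem2:
  shows "(\<forall>(G :: ('g, 'b) monoid_scheme) S M d (\<rho> :: 'g \<Rightarrow> complex \<Rightarrow> complex).
            group G \<and> finite S \<and> S \<subseteq> carrier G \<and> (\<forall>s\<in>S. inv\<^bsub>G\<^esub> s \<in> S)
            \<and> generate G S = carrier G
            \<and> cc_one_manifold M d
            \<and> (\<forall>g\<in>carrier G. \<exists>g'. homeomorphism M M (\<rho> g) g')
            \<and> (\<forall>g\<in>carrier G. \<forall>h\<in>carrier G. \<forall>x\<in>M. \<rho> (g \<otimes>\<^bsub>G\<^esub> h) x = \<rho> g (\<rho> h x))
            \<and> (\<forall>x\<in>M. \<rho> \<one>\<^bsub>G\<^esub> x = x)
            \<and> (\<lambda>n. ln (real (card (word_ball G S n))) / real n) \<longlonglongrightarrow> 0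
          \<longrightarrow> (\<forall>\<epsilon>>0. \<exists>h h'. homeomorphism M M h h' \<and>
                 (\<forall>s\<in>S. lipschitz_wrt d M (exp \<epsilon>) (h \<circ> \<rho> s \<circ> h'))))
       \<and> (\<forall>f f'. homeomorphism circle circle f f' \<longrightarrow>
            (\<forall>\<epsilon>>0. \<exists>h h'. homeomorphism circle circle h h' \<and>
                 lipschitz_wrt circ_dist circle (exp \<epsilon>) (h \<circ> f \<circ> h')))
       \<and> (\<forall>f f'. homeomorphism circle circle f f' \<longrightarrow> top_entropy circ_dist circle f = 0)"
proof (intro conjI allI impI)
  fix G :: "('g, 'b) monoid_scheme" and S M d and \<rho> :: "'g \<Rightarrow> complex \<Rightarrow> complex" and \<epsilon> :: real
  assume H: "group G \<and> finite S \<and> S \<subseteq> carrier G \<and> (\<forall>s\<in>S. inv\<^bsub>G\<^esub> s \<in> S)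
            \<and> generate G S = carrier G
            \<and> cc_one_manifold M d
            \<and> (\<forall>g\<in>carrier G. \<exists>g'. homeomorphism M M (\<rho> g) g')
            \<and> (\<forall>g\<in>carrier G. \<forall>h\<in>carrier G. \<forall>x\<in>M. \<rho> (g \<otimes>\<^bsub>G\<^esub> h) x = \<rho> g (\<rho> h x))
            \<and> (\<forall>x\<in>M. \<rho> \<one>\<^bsub>G\<^esub> x = x)
            \<and> (\<lambda>n. ln (real (card (word_ball G S n))) / real n) \<longlonglongrightarrow> 0"
    and e: "\<epsilon> > 0"
  show "\<exists>h h'. homeomorphism M M h h' \<and> (\<forall>s\<in>S. lipschitz_wrt d M (exp \<epsilon>) (h \<circ> \<rho> s \<circ> h'))"
    by (rule part1) (use H e in auto)
next
  fix f f' :: "complex \<Rightarrow> complex" and \<epsilon> :: real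
  assume "homeomorphism circle circle f f'" "\<epsilon> > 0"
  then show "\<exists>h h'. homeomorphism circle circle h h' \<and> lipschitz_wrt circ_dist circle (exp \<epsilon>) (h \<circ> f \<circ> h')"
    by (rule circle_conj)
next
  fix f f' :: "complex \<Rightarrow> complex"
  assume "homeomorphism circle circle f f'"
  then show "top_entropy circ_dist circle f = 0" by (rule entropy_zero)
qed

end
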